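(* Let $d\in\mathbb{N}^+$, $a<b$, and let $N\ge 36d(2d+1)$ and $L\ge 11$ be integers. Then $\mathscr{H}_d(N,L)$ (restricted to $[a,b]^d$) is dense in $C([a,b]^d)$ with respect to the maximum norm.
   Context: Let $\sigma_1:\mathbb{R}\to\mathbb{R}$ be the continuous triangular-wave function of period $2$: $\sigma_1(x)=|x|$ for $x\in[-1,1]$ and $\sigma_1(x+2)=\sigma_1(x)$ for all $x$. Let $\sigma_2(x)=x/(|x|+1)$. The activation function is $\sigma(x)=\sigma_1(x)$ for $x\ge 0$ and $\sigma(x)=\sigma_2(x)$ for $x<0$, applied to vectors entrywise. For $N,L\in\mathbb{N}^+$, $\mathscr{H}_d(N,L)$ is the set of all functions $\phi:\mathbb{R}^d\to\mathbb{R}$ of the form $\phi=\mathcal{L}_L\circ\sigma\circ\mathcal{L}_{L-1}\circ\cdots\circ\sigma\circ\mathcal{L}_1\circ\sigma\circ\mathcal{L}_0$, where $\mathcal{L}_0:\mathbb{R}^d\to\mathbb{R}^N$, $\mathcal{L}_i:\mathbb{R}^N\to\mathbb{R}^N$ ($1\le i\le L-1$), $\mathcal{L}_L:\mathbb{R}^N\to\mathbb{R}$ are arbitrary affine maps. *)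

theory Defs
  imports "HOL-Analysis.Analysis"
begin

text \<open>Triangular wave of period 2: equals abs x on [-1,1], 2-periodic.\<close>
definition sigma1 :: "real \<Rightarrow> real" where
  "sigma1 x = \<bar>x - 2 * of_int \<lfloor>(x + 1) / 2\<rfloor>\<bar>"

definition sigma2 :: "real \<Rightarrow> real" where
  "sigma2 x = x / (\<bar>x\<bar> + 1)"

definition act :: "real \<Rightarrow> real" where
  "act x = (if x \<ge> 0 then sigma1 x else sigma2 x)"

text \<open>Vectors in R^N are represented as nat => real, only indices < N are used.
  An affine map R^m -> R^N is given by weights W and bias c.\<close>
definition affine_nat :: "nat \<Rightarrow> nat \<Rightarrow> (nat \<Rightarrow> nat \<Rightarrow> real) \<Rightarrow> (nat \<Rightarrow> real)
    \<Rightarrow> (nat \<Rightarrow> real) \<Rightarrow> (nat \<Rightarrow> real)" where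
  "affine_nat N m W c y = (\<lambda>i. if i < N then (\<Sum>j<m. W i j * y j) + c i else 0)"

definition affine_in :: "nat \<Rightarrow> (nat \<Rightarrow> 'd::finite \<Rightarrow> real) \<Rightarrow> (nat \<Rightarrow> real)
    \<Rightarrow> real^'d \<Rightarrow> (nat \<Rightarrow> real)" where
  "affine_in N W c x = (\<lambda>i. if i < N then (\<Sum>j\<in>UNIV. W i j * x $ j) + c i else 0)"

fun hidden_out :: "nat \<Rightarrow> (nat \<Rightarrow> 'd::finite \<Rightarrow> real) \<Rightarrow> (nat \<Rightarrow> real)
    \<Rightarrow> (nat \<Rightarrow> nat \<Rightarrow> nat \<Rightarrow> real) \<Rightarrow> (nat \<Rightarrow> nat \<Rightarrow> real)
    \<Rightarrow> real^'d \<Rightarrow> nat \<Rightarrow> (nat \<Rightarrow> real)" where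
  "hidden_out N W0 c0 W c x 0 = (\<lambda>i. act (affine_in N W0 c0 x i))"
| "hidden_out N W0 c0 W c x (Suc k) =
     (\<lambda>i. act (affine_nat N N (W (Suc k)) (c (Suc k)) (hidden_out N W0 c0 W c x k) i))"

definition H :: "nat \<Rightarrow> nat \<Rightarrow> (real^'d::finite \<Rightarrow> real) set" where
  "H N L = {\<phi>. \<exists>W0 c0 W c (w::nat \<Rightarrow> real) (b::real).
      \<phi> = (\<lambda>x. (\<Sum>j<N. w j * hidden_out N W0 c0 W c x (L - 1) j) + b)}"

end

theory Submission
  imports Defs
begin

lemma sigma1_floor: "sigma1 x = (if even \<lfloor>x\<rfloor> then frac x else 1 - frac x)"
proof -
  define k where "k = \<lfloor>x\<rfloor>"
  have kx: "of_int k \<le> x" "x < of_int k + 1" unfolding k_def by linarith+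
  have fr: "frac x = x - of_int k" unfolding k_def frac_def by simp
  show ?thesis
  proof (cases "even k")
    case True
    then obtain q where q: "k = 2*q" by auto
    have "\<lfloor>(x+1)/2\<rfloor> = q" using kx unfolding q by (intro floor_unique) (auto simp: field_simps)
    then show ?thesis using True fr kx unfolding sigma1_def k_def[symmetric] q by auto
  next
    case False
    then obtain q where q: "k = 2*q+1" by (metis oddE)
    have "\<lfloor>(x+1)/2\<rfloor> = q+1" using kx unfolding q by (intro floor_unique) (auto simp: field_simps)
    then show ?thesis using False fr kx unfolding sigma1_def k_def[symmetric] q by auto
  qed
qed

lemma sigma1_range: "0 \<le> sigma1 x" "sigma1 x \<le> 1"
  unfolding sigma1_floor using frac_ge_0[of x] frac_lt_1[of x] by auto

lemma sigma1_periodic: "sigma1 (x + 2 * of_int k) = sigma1 x"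
proof -
  have "\<lfloor>(x + 2 * of_int k + 1) / 2\<rfloor> = \<lfloor>(x+1)/2\<rfloor> + k"
    by (metis add.commute add_divide_distrib floor_add_int nonzero_mult_div_cancel_left
        zero_neq_numeral add.assoc)
  then show ?thesis unfolding sigma1_def by simp
qed

lemma sigma1_le: "sigma1 x \<le> \<bar>x - 2 * of_int k\<bar>"
proof -
  define q where "q = \<lfloor>(x+1)/2\<rfloor>"
  have q: "of_int q \<le> (x+1)/2" "(x+1)/2 < of_int q + 1" unfolding q_def by linarith+
  have s: "sigma1 x = \<bar>x - 2 * of_int q\<bar>" unfolding sigma1_def q_def by simp
  show ?thesis
  proof (cases "k = q")
    case False
    then have "k \<le> q - 1 \<or> k \<ge> q + 1" by linarith
    then have "of_int k \<le> (of_int q :: real) - 1 \<or> of_int k \<ge> (of_int q::real) + 1"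
      by (metis of_int_1 of_int_diff of_int_add of_int_le_iff)
    then show ?thesis using q s by auto
  qed (simp add: s)
qed

lemma sigma1_eq: "sigma1 x = \<bar>x - 2 * of_int \<lfloor>(x+1)/2\<rfloor>\<bar>"
  unfolding sigma1_def by simp

lemma sigma1_lip: "\<bar>sigma1 x - sigma1 y\<bar> \<le> \<bar>x - y\<bar>"
proof -
  have "sigma1 x \<le> \<bar>x - 2 * of_int \<lfloor>(y+1)/2\<rfloor>\<bar>" by (rule sigma1_le)
  moreover have "sigma1 y \<le> \<bar>y - 2 * of_int \<lfloor>(x+1)/2\<rfloor>\<bar>" by (rule sigma1_le)
  ultimately show ?thesis using sigma1_eq[of x] sigma1_eq[of y] by linarith
qed

lemma sigma1_abs: "\<bar>x\<bar> \<le> 1 \<Longrightarrow> sigma1 x = \<bar>x\<bar>"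
proof -
  assume a: "\<bar>x\<bar> \<le> 1"
  have "sigma1 x \<le> \<bar>x - 2 * of_int 0\<bar>" by (rule sigma1_le)
  moreover have "\<bar>x\<bar> \<le> sigma1 x"
  proof -
    define q where "q = \<lfloor>(x+1)/2\<rfloor>"
    have q: "of_int q \<le> (x+1)/2" "(x+1)/2 < of_int q + 1" unfolding q_def by linarith+
    have "q = 0 \<or> q = 1" using q a by auto
    then show ?thesis using a unfolding sigma1_def q_def[symmetric] by auto
  qed
  ultimately show ?thesis by simp
qed

lemma act_pos: "x \<ge> 0 \<Longrightarrow> act x = sigma1 x" by (simp add: act_def)

lemma act_id: "0 \<le> x \<Longrightarrow> x \<le> 1 \<Longrightarrow> act x = x"
  by (simp add: act_pos sigma1_abs)

lemma act_range: "x \<ge> 0 \<Longrightarrow> 0 \<le> act x \<and> act x \<le> 1"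
  by (simp add: act_pos sigma1_range)

lemma act_abs: "\<bar>z\<bar> \<le> B \<Longrightarrow> B > 0 \<Longrightarrow> B * act (z / B + 2) = \<bar>z\<bar>"
proof -
  assume a: "\<bar>z\<bar> \<le> B" "B > 0"
  have z: "\<bar>z / B\<bar> \<le> 1" using a by (simp add: abs_divide)
  have "z/B \<ge> -1" using z by linarith
  then have "act (z/B + 2) = sigma1 (z/B + 2 * of_int 1)" by (subst act_pos) auto
  also have "\<dots> = \<bar>z/B\<bar>" by (simp only: sigma1_periodic sigma1_abs[OF z])
  finally show ?thesis using a by (simp add: abs_divide)
qed

lemma act_recip: "u \<ge> 0 \<Longrightarrow> 1 + act (- u) = 1 / (1 + u)"
proof (cases "u = 0")
  case True then show ?thesis by (simp add: act_def sigma1_def)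
next
  case False
  assume "u \<ge> 0"
  then have "u > 0" using False by simp
  then show ?thesis by (simp add: act_def sigma2_def field_simps)
qed

lemma act_carry: "\<bar>z\<bar> \<le> B \<Longrightarrow> B > 0 \<Longrightarrow> 2 * B * act ((z + B) / (2 * B)) - B = z"
proof -
  assume a: "\<bar>z\<bar> \<le> B" "B > 0"
  have "act ((z + B) / (2 * B)) = (z + B) / (2 * B)" using a by (intro act_id) (auto simp: field_simps)
  then show ?thesis using a by simp
qed

definition real_at :: "nat \<Rightarrow> (real^'d::finite \<Rightarrow> nat \<Rightarrow> real) \<Rightarrow> nat \<Rightarrow> bool" where
  "real_at N h l \<longleftrightarrow> (\<exists>W0 c0 W c. h = (\<lambda>x. hidden_out N W0 c0 W c x l))"

definition aff_on :: "nat \<Rightarrow> 'a set \<Rightarrow> ('a \<Rightarrow> nat \<Rightarrow> real) \<Rightarrow> ('a \<Rightarrow> real) \<Rightarrow> bool" where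
  "aff_on N X h g \<longleftrightarrow> (\<exists>\<alpha> \<beta>. \<forall>x\<in>X. g x = (\<Sum>j<N. \<alpha> j * h x j) + \<beta>)"

definition aff_in :: "(real^'d::finite) set \<Rightarrow> (real^'d \<Rightarrow> real) \<Rightarrow> bool" where
  "aff_in X g \<longleftrightarrow> (\<exists>w c. \<forall>x\<in>X. g x = (\<Sum>j\<in>UNIV. w j * x$j) + c)"

lemma sum_ind: "finite A \<Longrightarrow> k \<in> A \<Longrightarrow> (\<Sum>j\<in>A. (if j = k then 1 else 0) * g j) = (g k :: real)"
proof -
  assume a: "finite A" "k \<in> A"
  have "(\<Sum>j\<in>A. (if j = k then 1 else 0) * g j) = (\<Sum>j\<in>A. if j = k then g j else 0)"
    by (rule sum.cong) auto
  then show ?thesis using a by simp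
qed

lemma aff_const: "aff_on N X h (\<lambda>x. c)"
  unfolding aff_on_def by (rule exI[of _ "\<lambda>j. 0"], rule exI[of _ c]) simp

lemma aff_neuron: "k < N \<Longrightarrow> aff_on N X h (\<lambda>x. h x k)"
  unfolding aff_on_def
  by (rule exI[of _ "\<lambda>j. if j = k then 1 else 0"], rule exI[of _ 0])
     (simp add: sum_ind)

lemma aff_add: "aff_on N X h f \<Longrightarrow> aff_on N X h g \<Longrightarrow> aff_on N X h (\<lambda>x. f x + g x)"
  unfolding aff_on_def
proof (elim exE)
  fix a1 b1 a2 b2
  assume "\<forall>x\<in>X. f x = (\<Sum>j<N. a1 j * h x j) + b1" "\<forall>x\<in>X. g x = (\<Sum>j<N. a2 j * h x j) + b2"
  then show "\<exists>\<alpha> \<beta>. \<forall>x\<in>X. f x + g x = (\<Sum>j<N. \<alpha> j * h x j) + \<beta>"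
    by (intro exI[of _ "\<lambda>j. a1 j + a2 j"] exI[of _ "b1 + b2"])
       (simp add: distrib_right sum.distrib)
qed

lemma aff_scale: "aff_on N X h f \<Longrightarrow> aff_on N X h (\<lambda>x. c * f x)"
  unfolding aff_on_def
proof (elim exE)
  fix a1 b1
  assume "\<forall>x\<in>X. f x = (\<Sum>j<N. a1 j * h x j) + b1"
  then show "\<exists>\<alpha> \<beta>. \<forall>x\<in>X. c * f x = (\<Sum>j<N. \<alpha> j * h x j) + \<beta>"
    by (intro exI[of _ "\<lambda>j. c * a1 j"] exI[of _ "c * b1"])
       (simp add: distrib_left sum_distrib_left mult.assoc)
qed

lemma aff_cong: "aff_on N X h f \<Longrightarrow> (\<And>x. x \<in> X \<Longrightarrow> f x = g x) \<Longrightarrow> aff_on N X h g"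
  unfolding aff_on_def by auto

lemma aff_minus: "aff_on N X h f \<Longrightarrow> aff_on N X h (\<lambda>x. - f x)"
  using aff_scale[of N X h f "-1"] by simp

lemma aff_diff: "aff_on N X h f \<Longrightarrow> aff_on N X h g \<Longrightarrow> aff_on N X h (\<lambda>x. f x - g x)"
  using aff_add[of N X h f "\<lambda>x. - g x"] aff_minus[of N X h g] by simp

lemma aff_divide: "aff_on N X h f \<Longrightarrow> aff_on N X h (\<lambda>x. f x / c)"
  using aff_scale[of N X h f "1/c"] by simp

lemma aff_scale_right: "aff_on N X h f \<Longrightarrow> aff_on N X h (\<lambda>x. f x * c)"
  using aff_scale[of N X h f c] by (simp add: mult.commute)

lemma aff_sum: "finite I \<Longrightarrow> (\<And>i. i \<in> I \<Longrightarrow> aff_on N X h (f i)) \<Longrightarrow> aff_on N X h (\<lambda>x. \<Sum>i\<in>I. f i x)"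
proof (induction I rule: finite_induct)
  case empty then show ?case by (simp add: aff_const)
next
  case (insert a F)
  then show ?case by (simp add: aff_add)
qed

lemmas aff_intros = aff_const aff_add aff_diff aff_scale aff_divide aff_minus aff_sum aff_scale_right

lemma affi_const: "aff_in X (\<lambda>x. c)"
  unfolding aff_in_def by (rule exI[of _ "\<lambda>j. 0"], rule exI[of _ c]) simp

lemma affi_coord: "aff_in X (\<lambda>x. x $ k)"
  unfolding aff_in_def
  by (rule exI[of _ "\<lambda>j. if j = k then 1 else 0"], rule exI[of _ 0])
     (simp add: sum_ind)

lemma affi_add: "aff_in X f \<Longrightarrow> aff_in X g \<Longrightarrow> aff_in X (\<lambda>x. f x + g x)"
  unfolding aff_in_def
proof (elim exE)
  fix a1 b1 a2 b2
  assume "\<forall>x\<in>X. f x = (\<Sum>j\<in>UNIV. a1 j * x $ j) + b1" "\<forall>x\<in>X. g x = (\<Sum>j\<in>UNIV. a2 j * x $ j) + b2"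
  then show "\<exists>w c. \<forall>x\<in>X. f x + g x = (\<Sum>j\<in>UNIV. w j * x $ j) + c"
    by (intro exI[of _ "\<lambda>j. a1 j + a2 j"] exI[of _ "b1 + b2"])
       (simp add: distrib_right sum.distrib)
qed

lemma affi_scale: "aff_in X f \<Longrightarrow> aff_in X (\<lambda>x. c * f x)"
  unfolding aff_in_def
proof (elim exE)
  fix a1 b1
  assume "\<forall>x\<in>X. f x = (\<Sum>j\<in>UNIV. a1 j * x $ j) + b1"
  then show "\<exists>w d. \<forall>x\<in>X. c * f x = (\<Sum>j\<in>UNIV. w j * x $ j) + d"
    by (intro exI[of _ "\<lambda>j. c * a1 j"] exI[of _ "c * b1"])
       (simp add: distrib_left sum_distrib_left mult.assoc)
qed

lemma affi_diff: "aff_in X f \<Longrightarrow> aff_in X g \<Longrightarrow> aff_in X (\<lambda>x. f x - g x)"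
  using affi_add[of X f "\<lambda>x. (-1) * g x"] affi_scale[of X g "-1"] by simp

lemma affi_divide: "aff_in X f \<Longrightarrow> aff_in X (\<lambda>x. f x / c)"
  using affi_scale[of X f "1/c"] by simp

lemmas affi_intros = affi_const affi_coord affi_add affi_diff affi_scale affi_divide

lemma hidden_out_upd:
  "k \<le> l \<Longrightarrow> hidden_out N W0 c0 (W(Suc l := V)) (c(Suc l := e)) x k = hidden_out N W0 c0 W c x k"
  by (induction k) auto

lemma step:
  assumes "real_at N h l" "\<forall>k<N. aff_on N X h (G k)"
  shows "\<exists>h'. real_at N h' (Suc l) \<and> (\<forall>x\<in>X. \<forall>k<N. h' x k = act (G k x))"
proof -
  obtain W0 c0 W c where h: "h = (\<lambda>x. hidden_out N W0 c0 W c x l)"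
    using assms(1) unfolding real_at_def by blast
  have "\<forall>k. \<exists>\<alpha> \<beta>. k < N \<longrightarrow> (\<forall>x\<in>X. G k x = (\<Sum>j<N. \<alpha> j * h x j) + \<beta>)"
    using assms(2) unfolding aff_on_def by blast
  then obtain \<alpha> \<beta> where ab: "\<And>k. k < N \<Longrightarrow> \<forall>x\<in>X. G k x = (\<Sum>j<N. \<alpha> k j * h x j) + \<beta> k"
    by metis
  define h' where "h' = (\<lambda>x. hidden_out N W0 c0 (W(Suc l := \<alpha>)) (c(Suc l := \<beta>)) x (Suc l))"
  have "real_at N h' (Suc l)" unfolding real_at_def h'_def by blast
  moreover have "\<forall>x\<in>X. \<forall>k<N. h' x k = act (G k x)"
    unfolding h'_def using ab by (simp add: hidden_out_upd affine_nat_def h)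
  ultimately show ?thesis by blast
qed

lemma base:
  assumes "\<forall>k<N. aff_in X (G k)"
  shows "\<exists>h. real_at N h 0 \<and> (\<forall>x\<in>X. \<forall>k<N. h x k = act (G k x))"
proof -
  have "\<forall>k. \<exists>w c. k < N \<longrightarrow> (\<forall>x\<in>X. G k x = (\<Sum>j\<in>UNIV. w j * x$j) + c)"
    using assms unfolding aff_in_def by blast
  then obtain w cc where ab: "\<And>k. k < N \<Longrightarrow> \<forall>x\<in>X. G k x = (\<Sum>j\<in>UNIV. w k j * x$j) + cc k"
    by metis
  define h where "h = (\<lambda>x. hidden_out N w cc (\<lambda>_ _ _. 0) (\<lambda>_ _. 0) x 0)"
  have "real_at N h 0" unfolding real_at_def h_def by blast
  moreover have "\<forall>x\<in>X. \<forall>k<N. h x k = act (G k x)"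
    unfolding h_def using ab by (simp add: affine_in_def)
  ultimately show ?thesis by blast
qed

lemma net_output:
  assumes "real_at N h (L - 1)" "aff_on N X h \<phi>"
  shows "\<exists>\<psi>\<in>H N L. \<forall>x\<in>X. \<psi> x = \<phi> x"
proof -
  obtain W0 c0 W c where h: "h = (\<lambda>x. hidden_out N W0 c0 W c x (L - 1))"
    using assms(1) unfolding real_at_def by blast
  obtain \<alpha> \<beta> where ab: "\<forall>x\<in>X. \<phi> x = (\<Sum>j<N. \<alpha> j * h x j) + \<beta>"
    using assms(2) unfolding aff_on_def by blast
  define \<psi> where "\<psi> = (\<lambda>x. (\<Sum>j<N. \<alpha> j * hidden_out N W0 c0 W c x (L - 1) j) + \<beta>)"
  have "\<psi> \<in> H N L" unfolding H_def \<psi>_def by blast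
  moreover have "\<forall>x\<in>X. \<psi> x = \<phi> x" using ab by (simp add: \<psi>_def h)
  ultimately show ?thesis by blast
qed

lemma enc_dec:
  fixes m s i j :: nat
  assumes "i < m" "j < m"
  shows "(s*m*m + i*m + j) div (m*m) = s" "((s*m*m + i*m + j) mod (m*m)) div m = i"
        "(s*m*m + i*m + j) mod m = j"
proof -
  have m: "m > 0" using assms by simp
  have ij: "i*m + j < m*m"
  proof -
    have "i*m + j < i*m + m" using assms by simp
    also have "\<dots> = (i+1)*m" by simp
    also have "\<dots> \<le> m*m" using assms by (intro mult_right_mono) auto
    finally show ?thesis .
  qed
  have mm: "m*m \<noteq> 0" using m by simp
  have e: "s*m*m + i*m + j = (i*m + j) + s * (m*m)" by (simp add: algebra_simps)
  have d0: "(i*m + j) div (m*m) = 0" using ij by simp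
  have m0: "(i*m + j) mod (m*m) = i*m + j" using ij by simp
  show "(s*m*m + i*m + j) div (m*m) = s" unfolding e div_mult_self1[OF mm] d0 by simp
  have "(s*m*m + i*m + j) mod (m*m) = i*m + j" unfolding e mod_mult_self1 m0 by simp
  moreover have "(i*m + j) div m = i" using assms m
    by (metis add.commute div_less div_mult_self1 not_less0 plus_nat.add_0 mult.commute)
  ultimately show "((s*m*m + i*m + j) mod (m*m)) div m = i" by simp
  have e2: "s*m*m + i*m + j = j + (s*m + i) * m" by (simp add: algebra_simps)
  show "(s*m*m + i*m + j) mod m = j" unfolding e2 mod_mult_self1 using assms by simp
qed

lemma enc_lt:
  fixes m s i j :: nat
  assumes "i < m" "j < m" "s < 8" "8*m*m \<le> N"
  shows "s*m*m + i*m + j < N"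
proof -
  have "i*m + j < m*m"
  proof -
    have "i*m + j < i*m + m" using assms by simp
    also have "\<dots> = (i+1)*m" by simp
    also have "\<dots> \<le> m*m" using assms by (intro mult_right_mono) auto
    finally show ?thesis .
  qed
  moreover have "s*m*m \<le> 7*m*m" using assms by simp
  ultimately show ?thesis using assms by linarith
qed

lemma dec_bounds:
  fixes k m :: nat
  assumes "k < 8*m*m"
  shows "k div (m*m) < 8" "(k mod (m*m)) div m < m" "k mod m < m"
proof -
  have m: "m > 0" using assms by (cases m) auto
  show "k div (m*m) < 8" using assms by (intro less_mult_imp_div_less) (simp add: mult.assoc)
  have "k mod (m*m) < m*m" using m by simp
  then show "(k mod (m*m)) div m < m" by (intro less_mult_imp_div_less) simp
  show "k mod m < m" using m by simp
qed

lemma step_lab: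
  assumes "real_at N h l" "8*m*m \<le> N" "\<And>s i j. s < (8::nat) \<Longrightarrow> i < m \<Longrightarrow> j < m \<Longrightarrow> aff_on N X h (Gl s i j)"
  shows "\<exists>h'. real_at N h' (Suc l) \<and> (\<forall>s<8. \<forall>i<m. \<forall>j<m. aff_on N X h' (\<lambda>x. act (Gl s i j x)))"
proof -
  define G where "G k = (if k < 8*m*m then Gl (k div (m*m)) ((k mod (m*m)) div m) (k mod m) else (\<lambda>x. 0))" for k
  have "\<forall>k<N. aff_on N X h (G k)"
  proof (intro allI impI)
    fix k assume "k < N"
    show "aff_on N X h (G k)"
    proof (cases "k < 8*m*m")
      case True
      then have "G k = Gl (k div (m*m)) ((k mod (m*m)) div m) (k mod m)" unfolding G_def by simp
      then show ?thesis using assms(3)[OF dec_bounds[OF True]] by simp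
    next
      case False
      then have "G k = (\<lambda>x. 0)" unfolding G_def by simp
      then show ?thesis by (simp add: aff_const)
    qed
  qed
  from step[OF assms(1) this] obtain h' where h': "real_at N h' (Suc l)" "\<forall>x\<in>X. \<forall>k<N. h' x k = act (G k x)"
    by blast
  have "aff_on N X h' (\<lambda>x. act (Gl s i j x))" if "s < 8" "i < m" "j < m" for s i j
  proof -
    let ?k = "s*m*m + i*m + j"
    have k: "?k < N" using enc_lt[OF that(2,3,1) assms(2)] .
    have k8: "?k < 8*m*m" using enc_lt[OF that(2,3,1) order_refl] .
    have G: "G ?k = Gl s i j" unfolding G_def using k8 enc_dec[OF that(2,3)] by simp
    have "\<And>x. x \<in> X \<Longrightarrow> h' x ?k = act (Gl s i j x)" using h'(2) k G by metis
    then show ?thesis by (rule aff_cong[OF aff_neuron[OF k]])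
  qed
  then show ?thesis using h' by blast
qed

lemma base_lab:
  assumes "8*m*m \<le> N" "\<And>s i j. s < (8::nat) \<Longrightarrow> i < m \<Longrightarrow> j < m \<Longrightarrow> aff_in X (Gl s i j)"
  shows "\<exists>h'. real_at N h' 0 \<and> (\<forall>s<8. \<forall>i<m. \<forall>j<m. aff_on N X h' (\<lambda>x. act (Gl s i j x)))"
proof -
  define G where "G k = (if k < 8*m*m then Gl (k div (m*m)) ((k mod (m*m)) div m) (k mod m) else (\<lambda>x. 0))" for k
  have "\<forall>k<N. aff_in X (G k)"
  proof (intro allI impI)
    fix k assume "k < N"
    show "aff_in X (G k)"
    proof (cases "k < 8*m*m")
      case True
      then have "G k = Gl (k div (m*m)) ((k mod (m*m)) div m) (k mod m)" unfolding G_def by simp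
      then show ?thesis using assms(2)[OF dec_bounds[OF True]] by simp
    next
      case False
      then have "G k = (\<lambda>x. 0)" unfolding G_def by simp
      then show ?thesis by (simp add: affi_const)
    qed
  qed
  from base[OF this] obtain h' where h': "real_at N h' 0" "\<forall>x\<in>X. \<forall>k<N. h' x k = act (G k x)"
    by blast
  have "aff_on N X h' (\<lambda>x. act (Gl s i j x))" if "s < 8" "i < m" "j < m" for s i j
  proof -
    let ?k = "s*m*m + i*m + j"
    have k: "?k < N" using enc_lt[OF that(2,3,1) assms(1)] .
    have k8: "?k < 8*m*m" using enc_lt[OF that(2,3,1) order_refl] .
    have G: "G ?k = Gl s i j" unfolding G_def using k8 enc_dec[OF that(2,3)] by simp
    have "\<And>x. x \<in> X \<Longrightarrow> h' x ?k = act (Gl s i j x)" using h'(2) k G by metis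
    then show ?thesis by (rule aff_cong[OF aff_neuron[OF k]])
  qed
  then show ?thesis using h' by blast
qed

definition thb :: "real \<Rightarrow> nat \<Rightarrow> real" where
  "thb b i = 1 / (1 + b * real (i + 1))"

definition Pq :: "nat \<Rightarrow> (nat \<Rightarrow> int) \<Rightarrow> real poly" where
  "Pq M q = (\<Sum>i<M. smult (of_int (q i)) (\<Prod>l\<in>{..<M}-{i}. [:1, real (l+1):]))"

lemma poly_Pq: "poly (Pq M q) b = (\<Sum>i<M. of_int (q i) * (\<Prod>l\<in>{..<M}-{i}. 1 + b * real (l+1)))"
  unfolding Pq_def by (simp add: poly_sum poly_prod algebra_simps)

lemma Pq_nonzero:
  assumes "i0 < M" "q i0 \<noteq> 0"
  shows "Pq M q \<noteq> 0"
proof -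
  define b0 where "b0 = - 1 / real (i0 + 1)"
  have z: "1 + b0 * real (i0 + 1) = 0" unfolding b0_def by simp
  have "(\<Sum>i<M. of_int (q i) * (\<Prod>l\<in>{..<M}-{i}. 1 + b0 * real (l+1)))
      = (\<Sum>i\<in>{i0}. of_int (q i) * (\<Prod>l\<in>{..<M}-{i}. 1 + b0 * real (l+1)))"
  proof (rule sum.mono_neutral_right)
    show "\<forall>i\<in>{..<M} - {i0}. of_int (q i) * (\<Prod>l\<in>{..<M} - {i}. 1 + b0 * real (l + 1)) = 0"
    proof
      fix i assume i: "i \<in> {..<M} - {i0}"
      have "(\<Prod>l\<in>{..<M} - {i}. 1 + b0 * real (l + 1)) = 0"
        using z i assms(1) by (intro prod_zero) auto
      then show "of_int (q i) * (\<Prod>l\<in>{..<M} - {i}. 1 + b0 * real (l + 1)) = 0" by simp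
    qed
  qed (use assms in auto)
  also have "\<dots> = of_int (q i0) * (\<Prod>l\<in>{..<M}-{i0}. 1 + b0 * real (l+1))" by simp
  also have "\<dots> \<noteq> 0"
  proof -
    have "(\<Prod>l\<in>{..<M}-{i0}. 1 + b0 * real (l+1)) \<noteq> 0"
    proof -
      have "1 + b0 * real (l+1) \<noteq> 0" if l: "l \<in> {..<M}-{i0}" for l
      proof
        assume "1 + b0 * real (l+1) = 0"
        then have "real (i0 + 1) = real (l + 1)" unfolding b0_def by (simp add: field_simps)
        then show False using l by simp
      qed
      then show ?thesis by (simp add: prod_zero_iff)
    qed
    then show ?thesis using assms by simp
  qed
  finally show ?thesis by (metis poly_Pq poly_0)
qed

lemma sum_thb_poly:
  assumes "b > 0"
  shows "(\<Prod>l<M. 1 + b * real (l+1)) * (\<Sum>i<M. of_int (q i) * thb b i) = poly (Pq M q) b"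
proof -
  have "(\<Prod>l<M. 1 + b * real (l+1)) * (of_int (q i) * thb b i) =
        of_int (q i) * (\<Prod>l\<in>{..<M}-{i}. 1 + b * real (l+1))" if "i < M" for i
  proof -
    have "(\<Prod>l<M. 1 + b * real (l+1)) = (1 + b * real (i+1)) * (\<Prod>l\<in>{..<M}-{i}. 1 + b * real (l+1))"
      using that by (subst prod.remove[of _ i]) auto
    moreover have "1 + b * real (i+1) > 0" using assms by (simp add: add_pos_nonneg)
    ultimately show ?thesis unfolding thb_def by (simp add: field_simps)
  qed
  then show ?thesis unfolding poly_Pq sum_distrib_left by (intro sum.cong) auto
qed

lemma good_b_exists:
  "\<exists>b>0. \<forall>q::nat \<Rightarrow> int. (\<Sum>i<M. of_int (q i) * thb b i) = 0 \<longrightarrow> (\<forall>i<M. q i = 0)"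
proof -
  define qq :: "int list \<Rightarrow> nat \<Rightarrow> int" where "qq l i = (if i < length l then l ! i else 0)" for l i
  define Z where "Z l = {b. poly (Pq M (qq l)) b = 0}" for l
  define I where "I = {l. \<exists>i<M. qq l i \<noteq> 0}"
  have fin: "finite (Z l)" if lI: "l \<in> I" for l
  proof -
    obtain i0 where "i0 < M" "qq l i0 \<noteq> 0" using lI unfolding I_def by blast
    then show ?thesis unfolding Z_def by (intro poly_roots_finite Pq_nonzero)
  qed
  have cnt: "countable (\<Union>l\<in>I. Z l)"
    by (intro countable_UN) (auto intro: countable_finite fin)
  have "uncountable ({0<..<1::real} - (\<Union>l\<in>I. Z l))"
    by (intro uncountable_minus_countable cnt) (simp add: uncountable_open_interval)
  then have "{0<..<1::real} - (\<Union>l\<in>I. Z l) \<noteq> {}" by (metis countable_empty)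
  then obtain b where b: "b \<in> {0<..<1::real}" "b \<notin> (\<Union>l\<in>I. Z l)"
    by blast
  have "\<forall>q::nat \<Rightarrow> int. (\<Sum>i<M. of_int (q i) * thb b i) = 0 \<longrightarrow> (\<forall>i<M. q i = 0)"
  proof (rule allI, rule impI)
    fix q :: "nat \<Rightarrow> int"
    assume s: "(\<Sum>i<M. of_int (q i) * thb b i) = 0"
    define l where "l = map q [0..<M]"
    have ql: "qq l i = q i" if "i < M" for i using that unfolding qq_def l_def by simp
    have "(\<Sum>i<M. of_int (qq l i) * thb b i) = 0" using s ql by simp
    then have "poly (Pq M (qq l)) b = 0"
      using sum_thb_poly[of b M "qq l"] b(1) by simp
    then have "l \<notin> I" using b(2) unfolding Z_def by blast
    then show "\<forall>i<M. q i = 0" using ql unfolding I_def by auto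
  qed
  then show ?thesis using b(1) by auto
qed

lemma thb_indep:
  assumes b: "b > 0" and good: "\<forall>q::nat \<Rightarrow> int. (\<Sum>i<M. of_int (q i) * thb b i) = 0 \<longrightarrow> (\<forall>i<M. q i = 0)"
  shows "module.independent (\<lambda>r. (*) (real_of_int r)) (thb b ` {..<M})"
    and "inj_on (thb b) {..<M}"
proof -
  show inj: "inj_on (thb b) {..<M}"
  proof (rule inj_onI)
    fix i j assume "i \<in> {..<M}" "j \<in> {..<M}" "thb b i = thb b j"
    then have "1 + b * real (i+1) = 1 + b * real (j+1)"
      unfolding thb_def using b by (simp add: add_pos_nonneg)
    then show "i = j" using b by simp
  qed
  interpret Modules.module "(\<lambda>r. (*) (real_of_int r))"
    by (simp add: Modules.module.intro distrib_left mult.commute)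
  show "independent (thb b ` {..<M})"
    unfolding dependent_explicit
  proof (clarify)
    fix t u v
    assume t: "finite t" "t \<subseteq> thb b ` {..<M}" "(\<Sum>v\<in>t. real_of_int (u v) * v) = 0"
      and v: "v \<in> t" "u v \<noteq> 0"
    define I where "I = {i. i < M \<and> thb b i \<in> t}"
    have tI: "t = thb b ` I" using t(2) unfolding I_def by auto
    have injI: "inj_on (thb b) I" using inj unfolding I_def by (rule inj_on_subset) auto
    define q where "q i = (if i \<in> I then u (thb b i) else 0)" for i
    have "(\<Sum>i<M. of_int (q i) * thb b i) = (\<Sum>i\<in>I. of_int (u (thb b i)) * thb b i)"
      unfolding q_def by (rule sum.mono_neutral_cong_right) (auto simp: I_def)
    also have "\<dots> = (\<Sum>v\<in>t. real_of_int (u v) * v)"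
      unfolding tI by (rule sum.reindex[OF injI, symmetric, unfolded comp_def])
    also have "\<dots> = 0" by (rule t(3))
    finally have "\<forall>i<M. q i = 0" using good by blast
    moreover obtain i where "i \<in> I" "v = thb b i" using v(1) tI by blast
    ultimately show False using v(2) unfolding q_def I_def by auto
  qed
qed

lemma lookup:
  fixes \<alpha> :: "nat \<Rightarrow> real"
  assumes al: "\<forall>K. 0 \<le> \<alpha> K \<and> \<alpha> K \<le> 1" and dl: "\<delta> > 0"
  shows "\<exists>b t C. b > 0 \<and> C \<ge> 2*\<bar>t\<bar> \<and>
     (\<forall>K\<in>{1..M}. \<bar>act (2*t*(1 + act (-(b*real K))) + C) - \<alpha> K\<bar> < \<delta>)"
proof -
  obtain b where b: "b > 0" "\<forall>q::nat \<Rightarrow> int. (\<Sum>i<M. of_int (q i) * thb b i) = 0 \<longrightarrow> (\<forall>i<M. q i = 0)"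
    using good_b_exists by blast
  note ind = thb_indep[OF b]
  obtain t h where th: "\<And>i. i < M \<Longrightarrow> \<bar>t * thb b i - of_int (h i) - \<alpha> (i+1) / 2\<bar> < \<delta>/2"
    using Kronecker_thm_1[OF ind(1) ind(2), of "\<delta>/2" "\<lambda>i. \<alpha> (i+1) / 2"] dl by auto
  define C where "C = 2 * real_of_int \<lceil>\<bar>t\<bar>\<rceil>"
  have C: "C \<ge> 2*\<bar>t\<bar>" unfolding C_def by linarith
  have "\<bar>act (2*t*(1 + act (-(b*real K))) + C) - \<alpha> K\<bar> < \<delta>" if K: "K \<in> {1..M}" for K
  proof -
    define i where "i = K - 1"
    have i: "i < M" "K = i + 1" using K unfolding i_def by auto
    have "1 + act (-(b*real K)) = 1 / (1 + b * real K)"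
      using b(1) by (intro act_recip) simp
    also have "\<dots> = thb b i" unfolding thb_def i(2) by simp
    finally have th1: "1 + act (-(b*real K)) = thb b i" .
    have thpos: "0 < thb b i" "thb b i \<le> 1" unfolding thb_def using b(1) by (auto simp: add_pos_nonneg)
    define e where "e = t * thb b i - of_int (h i) - \<alpha> K / 2"
    have e: "\<bar>e\<bar> < \<delta>/2" using th[OF i(1)] unfolding e_def i(2) by simp
    have "\<bar>t * thb b i\<bar> \<le> \<bar>t\<bar>" using thpos by (simp add: abs_mult mult_left_le)
    then have arg: "2*t*thb b i + C \<ge> 0" using C by linarith
    have eq: "2*t*thb b i + C = (\<alpha> K + 2*e) + 2 * of_int (h i + \<lceil>\<bar>t\<bar>\<rceil>)"
      unfolding e_def C_def by (simp add: algebra_simps)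
    have "act (2*t*(1 + act (-(b*real K))) + C) = sigma1 (\<alpha> K + 2*e)"
      unfolding th1 using arg by (simp only: act_pos eq sigma1_periodic)
    moreover have "sigma1 (\<alpha> K) = \<alpha> K" using al by (simp add: sigma1_abs)
    moreover have "\<bar>sigma1 (\<alpha> K + 2*e) - sigma1 (\<alpha> K)\<bar> \<le> \<bar>2*e\<bar>"
      using sigma1_lip[of "\<alpha> K + 2*e" "\<alpha> K"] by simp
    ultimately show ?thesis using e by simp
  qed
  then show ?thesis using b(1) C by blast
qed

definition clamp :: "real \<Rightarrow> real" where
  "clamp z = (\<bar>z\<bar> - \<bar>z - 1\<bar> + 1) / 2"

lemma clamp_range: "0 \<le> clamp z" "clamp z \<le> 1" unfolding clamp_def by (auto simp: abs_if)
lemma clamp_0: "z \<le> 0 \<Longrightarrow> clamp z = 0" unfolding clamp_def by (auto simp: abs_if)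
lemma clamp_1: "z \<ge> 1 \<Longrightarrow> clamp z = 1" unfolding clamp_def by (auto simp: abs_if)
lemma clamp_lt1: "clamp z < 1 \<Longrightarrow> z < 1" unfolding clamp_def by (auto simp: abs_if split: if_splits)
lemma clamp_gt0: "clamp z > 0 \<Longrightarrow> z > 0" unfolding clamp_def by (auto simp: abs_if split: if_splits)

lemma sigma1_2s: "sigma1 (2 * s) = (if frac s < 1/2 then 2*frac s else 2 - 2*frac s)"
proof -
  define k where "k = \<lfloor>s\<rfloor>"
  define f where "f = frac s"
  have sf: "s = of_int k + f" "0 \<le> f" "f < 1" unfolding k_def f_def using frac_lt_1[of s] by (auto simp: frac_def)
  show ?thesis
  proof (cases "f < 1/2")
    case True
    have "\<lfloor>2 * s\<rfloor> = 2*k" using sf True by (intro floor_unique) auto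
    moreover have "frac (2 * s) = 2*f" using sf True calculation by (simp add: frac_def)
    ultimately show ?thesis unfolding sigma1_floor using True f_def by simp
  next
    case False
    have "\<lfloor>2 * s\<rfloor> = 2*k+1" using sf False by (intro floor_unique) auto
    moreover have "frac (2 * s) = 2*f - 1" using sf False calculation by (simp add: frac_def)
    ultimately show ?thesis unfolding sigma1_floor using False f_def by simp
  qed
qed

lemma sigma1_shift:
  "sigma1 (s + 3/2) = (if even \<lfloor>s\<rfloor> then (if frac s < 1/2 then 1/2 - frac s else frac s - 1/2)
                       else (if frac s < 1/2 then frac s + 1/2 else 3/2 - frac s))"
proof -
  define k where "k = \<lfloor>s\<rfloor>"
  define f where "f = frac s"
  have sf: "s = of_int k + f" "0 \<le> f" "f < 1" unfolding k_def f_def using frac_lt_1[of s] by (auto simp: frac_def)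
  show ?thesis
  proof (cases "f < 1/2")
    case True
    have fl: "\<lfloor>s + 3/2\<rfloor> = k+1" using sf True by (intro floor_unique) auto
    moreover have "frac (s + 3/2) = f + 1/2" using sf True fl by (simp add: frac_def)
    ultimately show ?thesis unfolding sigma1_floor[of "s + 3/2"] using True f_def k_def by simp
  next
    case False
    have fl: "\<lfloor>s + 3/2\<rfloor> = k+2" using sf False by (intro floor_unique) auto
    moreover have "frac (s + 3/2) = f - 1/2" using sf False fl by (simp add: frac_def)
    ultimately show ?thesis unfolding sigma1_floor[of "s + 3/2"] using False f_def k_def by simp
  qed
qed

lemma floor_recover:
  assumes r: "0 < r" "r \<le> 1/8" and p: "clamp (2 - sigma1 (2 * s) / (2*r)) < 1"
  shows "s - \<bar>sigma1 s - clamp (1/2 + (sigma1 (s + 3/2) - 1/2) / (2*r))\<bar> = of_int \<lfloor>s\<rfloor>"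
proof -
  define f where "f = frac s"
  have f01: "0 \<le> f" "f < 1" unfolding f_def by (auto simp: frac_lt_1)
  have "2 - sigma1 (2 * s) / (2*r) < 1" using clamp_lt1[OF p] .
  then have t: "sigma1 (2 * s) > 2*r" using r by (simp add: field_simps)
  have fr: "r < f" "f < 1 - r"
    using t r f01 unfolding sigma1_2s f_def[symmetric] by (auto split: if_splits)
  have sfl: "s = of_int \<lfloor>s\<rfloor> + f" unfolding f_def frac_def by simp
  show ?thesis
  proof (cases "even \<lfloor>s\<rfloor>")
    case True
    have "sigma1 (s + 3/2) \<le> 1/2 - r" using fr True unfolding sigma1_shift f_def[symmetric] by auto
    then have "1/2 + (sigma1 (s + 3/2) - 1/2) / (2*r) \<le> 0" using r by (simp add: field_simps)
    then have "clamp (1/2 + (sigma1 (s + 3/2) - 1/2) / (2*r)) = 0" by (rule clamp_0)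
    moreover have "sigma1 s = f" using True unfolding sigma1_floor f_def by simp
    ultimately show ?thesis using f01 sfl by simp
  next
    case False
    have "sigma1 (s + 3/2) \<ge> 1/2 + r" using fr False unfolding sigma1_shift f_def[symmetric] by auto
    then have "1/2 + (sigma1 (s + 3/2) - 1/2) / (2*r) \<ge> 1" using r by (simp add: field_simps)
    then have "clamp (1/2 + (sigma1 (s + 3/2) - 1/2) / (2*r)) = 1" by (rule clamp_1)
    moreover have "sigma1 s = 1 - f" using False unfolding sigma1_floor f_def by simp
    ultimately show ?thesis using f01 sfl by simp
  qed
qed

lemma pen_pos_near:
  assumes r: "0 < r" and p: "clamp (2 - sigma1 (2 * s) / (2*r)) > 0"
  shows "\<exists>z::int. \<bar>s - of_int z\<bar> < 2*r"
proof -
  define f where "f = frac s"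
  have f01: "0 \<le> f" "f < 1" unfolding f_def by (auto simp: frac_lt_1)
  have "2 - sigma1 (2 * s) / (2*r) > 0" using clamp_gt0[OF p] .
  then have t: "sigma1 (2 * s) < 4*r" using r by (simp add: field_simps)
  have sfl: "s = of_int \<lfloor>s\<rfloor> + f" unfolding f_def frac_def by simp
  show ?thesis
  proof (cases "f < 1/2")
    case True
    then have "f < 2*r" using t unfolding sigma1_2s f_def[symmetric] by simp
    then show ?thesis using sfl f01 by (intro exI[of _ "\<lfloor>s\<rfloor>"]) simp
  next
    case False
    then have "1 - f < 2*r" using t unfolding sigma1_2s f_def[symmetric] by simp
    then show ?thesis using sfl f01 by (intro exI[of _ "\<lfloor>s\<rfloor> + 1"]) simp
  qed
qed

lemma two_near_impossible:
  fixes m j1 j2 :: nat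
  assumes "j1 < j2" "j2 < m" "\<bar>s1 - of_int z1\<bar> < 1/(4*real m)" "\<bar>s2 - of_int z2\<bar> < 1/(4*real m)"
    "s1 - s2 = (real j2 - real j1) / m"
  shows False
proof -
  have m: "real m > 0" using assms by simp
  have h: "1/(4*real m) + 1/(4*real m) = 1/(2*real m)" by simp
  have a: "\<bar>(s1 - of_int z1) - (s2 - of_int z2)\<bar> < 1/(2*real m)"
    using assms(3,4) h by linarith
  define w where "w = int j2 - int j1 - int m * (z1 - z2)"
  have e: "real m * (s1 - s2) = real j2 - real j1" using assms(5) m by (simp add: field_simps)
  have "real m * ((s1 - of_int z1) - (s2 - of_int z2)) = real m * (s1 - s2) - real m * of_int (z1 - z2)"
    by (simp add: algebra_simps)
  also have "\<dots> = of_int w" unfolding e w_def by simp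
  finally have "real m * ((s1 - of_int z1) - (s2 - of_int z2)) = of_int w" .
  then have "\<bar>of_int w\<bar> = real m * \<bar>(s1 - of_int z1) - (s2 - of_int z2)\<bar>"
    using m by (metis abs_mult abs_of_pos)
  also have "\<dots> < real m * (1/(2*real m))" using a m by (intro mult_strict_left_mono) auto
  also have "\<dots> = 1/2" using m by simp
  finally have "\<bar>real_of_int w\<bar> < 1/2" .
  then have "w = 0" by linarith
  then have eq: "int j2 - int j1 = int m * (z1 - z2)" unfolding w_def by simp
  have lt: "0 < int j2 - int j1" "int j2 - int j1 < int m" using assms by auto
  show False
  proof (cases "z1 - z2 \<ge> 1")
    case True
    then have "int m * (z1 - z2) \<ge> int m * 1" by (intro mult_left_mono) auto
    then show False using eq lt by linarith
  next
    case False
    then have "z1 - z2 \<le> 0" by simp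
    then have "int m * (z1 - z2) \<le> 0" by (simp add: mult_nonneg_nonpos)
    then show False using eq lt by simp
  qed
qed

lemma digits_inj:
  fixes B :: nat and a c :: "nat \<Rightarrow> nat"
  assumes "\<forall>i<D. a i < B" "\<forall>i<D. c i < B" "(\<Sum>i<D. a i * B^i) = (\<Sum>i<D. c i * B^i)"
  shows "\<forall>i<D. a i = c i"
  using assms
proof (induction D arbitrary: a c)
  case 0 then show ?case by simp
next
  case (Suc D)
  have e: "(\<Sum>i<Suc D. a i * B^i) = a 0 + B * (\<Sum>i<D. a (Suc i) * B^i)" for a :: "nat \<Rightarrow> nat"
  proof -
    have "(\<Sum>i<Suc D. a i * B^i) = a 0 * B^0 + (\<Sum>i<D. a (Suc i) * B^(Suc i))"
      by (rule sum.lessThan_Suc_shift)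
    also have "\<dots> = a 0 + B * (\<Sum>i<D. a (Suc i) * B^i)"
      by (simp add: sum_distrib_left mult.left_commute)
    finally show ?thesis .
  qed
  have a0: "a 0 < B" "c 0 < B" using Suc.prems(1,2) by blast+
  have eq: "a 0 + B * (\<Sum>i<D. a (Suc i) * B^i) = c 0 + B * (\<Sum>i<D. c (Suc i) * B^i)"
    using Suc.prems(3) unfolding e .
  have m1: "(a 0 + B * (\<Sum>i<D. a (Suc i) * B^i)) mod B = a 0"
    using a0(1) by (simp only: mod_mult_self2 mod_less)
  have m2: "(c 0 + B * (\<Sum>i<D. c (Suc i) * B^i)) mod B = c 0"
    using a0(2) by (simp only: mod_mult_self2 mod_less)
  have h0: "a 0 = c 0" using m1 m2 eq by metis
  have B: "B > 0" using a0 by linarith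
  have "B * (\<Sum>i<D. a (Suc i) * B^i) = B * (\<Sum>i<D. c (Suc i) * B^i)" using eq h0 by linarith
  then have s: "(\<Sum>i<D. a (Suc i) * B^i) = (\<Sum>i<D. c (Suc i) * B^i)" using B by (metis mult_left_cancel not_gr0)
  have p1: "\<forall>i<D. a (Suc i) < B" using Suc.prems(1) by (metis Suc_mono)
  have p2: "\<forall>i<D. c (Suc i) < B" using Suc.prems(2) by (metis Suc_mono)
  have ih: "\<forall>i<D. a (Suc i) = c (Suc i)" by (rule Suc.IH[OF p1 p2 s])
  show ?case
  proof (intro allI impI)
    fix i assume "i < Suc D"
    then show "a i = c i" using h0 ih by (cases i) auto
  qed
qed

lemma recip_gen: "0 < c \<Longrightarrow> c \<le> y \<Longrightarrow> (1 + act (- (y / c - 1))) / c = 1 / y"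
proof -
  assume c: "0 < c" "c \<le> y"
  have "y / c - 1 \<ge> 0" using c by (simp add: field_simps)
  then have "1 + act (- (y / c - 1)) = 1 / (1 + (y/c - 1))" by (rule act_recip)
  also have "\<dots> = c / y" using c by (simp add: field_simps)
  finally show ?thesis using c by simp
qed

definition Qf :: "real \<Rightarrow> real" where
  "Qf X = (1 + act (- (X / 2 - 1))) / 2 - (1 + act (- ((X + 1) / 3 - 1))) / 3"

lemma Qf_eq: "X \<ge> 2 \<Longrightarrow> Qf X = 1 / (X * (X + 1))"
proof -
  assume X: "X \<ge> 2"
  have h1: "(1 + act (- (X / 2 - 1))) / 2 = 1 / X" using X by (intro recip_gen) auto
  have h2: "(1 + act (- ((X + 1) / 3 - 1))) / 3 = 1 / (X + 1)" using X by (intro recip_gen) auto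
  have "Qf X = 1 / X - 1 / (X + 1)" by (simp only: Qf_def h1 h2)
  also have "\<dots> = 1 / (X * (X + 1))" using X by (simp add: field_simps)
  finally show ?thesis .
qed

lemma sq_gadget:
  assumes "2 \<le> X" "X \<le> Bx" "c = 1 / (Bx * (Bx + 1))"
  shows "(1 + act (- (Qf X / c - 1))) / c - X = X^2"
proof -
  have X0: "X > 0" using assms by simp
  have q: "Qf X = 1 / (X * (X + 1))" using assms by (intro Qf_eq) auto
  have c0: "c > 0" using assms by simp
  have "X * (X + 1) \<le> Bx * (Bx + 1)" using assms by (intro mult_mono) auto
  moreover have "0 < X * (X + 1)" using X0 by simp
  ultimately have "c \<le> Qf X" unfolding q assms(3)
    by (intro frac_le) auto
  then have "(1 + act (- (Qf X / c - 1))) / c = 1 / Qf X" using c0 by (intro recip_gen) auto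
  also have "\<dots> = X * (X + 1)" unfolding q by simp
  finally show ?thesis by (simp add: power2_eq_square algebra_simps)
qed

locale netc =
  fixes a b :: real and n D m :: nat and r :: real and cd :: "nat \<Rightarrow> 'd::finite"
    and bb tt CC :: "nat \<Rightarrow> real" and X :: "(real^'d) set"
  assumes ab: "a < b" and n1: "n \<ge> 1" and bbp: "\<And>j. bb j > 0" and CCt: "\<And>j. CC j \<ge> 2*\<bar>tt j\<bar>"
    and D_def: "D = CARD('d)" and m_def: "m = D + 1" and r_def: "r = 1 / (8 * real m)"
    and X_def: "X = cbox (\<chi> i. a) (\<chi> i. b)"
    and cd: "bij_betw cd {..<D} (UNIV :: 'd set)"
begin

definition "sv i j x = real n * (x$(cd i) - a)/(b - a) + 2 - real j / real m"
definition "uv i j x = sigma1 (sv i j x)"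
definition "wv i j x = sigma1 (sv i j x + 3/2)"
definition "tv i j x = sigma1 (2 * sv i j x)"
definition "z1 i j x = 1/2 + (wv i j x - 1/2)/(2*r)"
definition "z2 i j x = 2 - tv i j x/(2*r)"
definition "piv i j x = clamp (z1 i j x)"
definition "pv i j x = clamp (z2 i j x)"
definition "frv i j x = \<bar>uv i j x - piv i j x\<bar>"
definition "kap i j x = sv i j x - frv i j x"
definition "sp j x = (\<Sum>i<D. pv i j x)"
definition "rho j x = ((1 - sp j x) + \<bar>1 - sp j x\<bar>)/2"
definition "Kn j x = 1 + (\<Sum>i<D. kap i j x * real (n+3)^i)"
definition "th j x = 1 + act (-(bb j * Kn j x))"
definition "vv j x = act (2 * tt j * th j x + CC j)"
definition "SS x = (\<Sum>j<m. rho j x)"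
definition "RR x = 1 + act (-(SS x - 1))"
definition "PP x = (\<Sum>j<m. rho j x * vv j x)"
definition "FF x = PP x * RR x"
definition "fl i j x = \<lfloor>sv i j x\<rfloor>"
definition "code j x = 1 + (\<Sum>i<D. nat (fl i j x) * (n+3)^i)"

lemma m1: "m \<ge> 1" and D1: "D \<ge> 1" using m_def D_def by auto
lemma r_pos: "0 < r" and r_le: "r \<le> 1/8" using m1 unfolding r_def by (auto simp: field_simps)

lemma Xcoord: "x \<in> X \<Longrightarrow> a \<le> x$k \<and> x$k \<le> b"
  unfolding X_def by (simp add: mem_box_cart)

lemma sv_bounds: "x \<in> X \<Longrightarrow> j < m \<Longrightarrow> 1 \<le> sv i j x \<and> sv i j x \<le> real n + 2"
proof -
  assume x: "x \<in> X" and j: "j < m"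
  have c: "a \<le> x$(cd i)" "x$(cd i) \<le> b" using Xcoord[OF x] by auto
  define q where "q = (x$(cd i) - a)/(b - a)"
  have "0 \<le> q" "q \<le> 1" unfolding q_def using c ab by (auto simp: field_simps)
  then have "0 \<le> real n * q" "real n * q \<le> real n"
    by (auto simp: mult_left_le)
  moreover have "real j / real m < 1" "0 \<le> real j / real m" using j by auto
  moreover have "sv i j x = real n * q + 2 - real j / real m" unfolding sv_def q_def by simp
  ultimately show ?thesis by (intro conjI) linarith+
qed

lemma sv_diff: "sv i j1 x - sv i j2 x = (real j2 - real j1) / real m"
  unfolding sv_def by (simp add: diff_divide_distrib)

lemma pv_range: "0 \<le> pv i j x" "pv i j x \<le> 1" unfolding pv_def by (rule clamp_range)+
lemma piv_range: "0 \<le> piv i j x" "piv i j x \<le> 1" unfolding piv_def by (rule clamp_range)+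
lemma uv_range: "0 \<le> uv i j x" "uv i j x \<le> 1" unfolding uv_def by (rule sigma1_range)+
lemma wv_range: "0 \<le> wv i j x" "wv i j x \<le> 1" unfolding wv_def by (rule sigma1_range)+
lemma tv_range: "0 \<le> tv i j x" "tv i j x \<le> 1" unfolding tv_def by (rule sigma1_range)+

lemma sp_range: "0 \<le> sp j x" "sp j x \<le> real D"
proof -
  show "0 \<le> sp j x" unfolding sp_def by (intro sum_nonneg) (simp add: pv_range)
  have "sp j x \<le> (\<Sum>i<D. 1)" unfolding sp_def by (intro sum_mono) (simp add: pv_range)
  then show "sp j x \<le> real D" by simp
qed

lemma rho_range: "0 \<le> rho j x" "rho j x \<le> 1"
  unfolding rho_def using sp_range[of j x] by auto

lemma frv_le1: "frv i j x \<le> 1" "0 \<le> frv i j x"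
  unfolding frv_def using uv_range[of i j x] piv_range[of i j x] by auto

lemma kap_nonneg: "x \<in> X \<Longrightarrow> j < m \<Longrightarrow> 0 \<le> kap i j x"
  unfolding kap_def using sv_bounds[of x j i] frv_le1[of i j x] by auto

lemma Kn_ge1: "x \<in> X \<Longrightarrow> j < m \<Longrightarrow> 1 \<le> Kn j x"
  unfolding Kn_def using kap_nonneg by (auto intro!: sum_nonneg)

lemma th_eq: "x \<in> X \<Longrightarrow> j < m \<Longrightarrow> th j x = 1 / (1 + bb j * Kn j x)"
proof -
  assume a: "x \<in> X" "j < m"
  have "0 \<le> bb j * Kn j x" using Kn_ge1[OF a] bbp[of j] by simp
  then show ?thesis unfolding th_def by (rule act_recip)
qed

lemma th_range: "x \<in> X \<Longrightarrow> j < m \<Longrightarrow> 0 < th j x \<and> th j x \<le> 1"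
proof -
  assume a: "x \<in> X" "j < m"
  have "bb j * Kn j x > 0" using Kn_ge1[OF a] bbp[of j] by simp
  then show ?thesis unfolding th_eq[OF a] by (simp add: field_simps)
qed

lemma vv_range: "x \<in> X \<Longrightarrow> j < m \<Longrightarrow> 0 \<le> vv j x \<and> vv j x \<le> 1"
proof -
  assume a: "x \<in> X" "j < m"
  have "\<bar>tt j * th j x\<bar> \<le> \<bar>tt j\<bar>" using th_range[OF a] by (simp add: abs_mult mult_left_le)
  then have "2 * tt j * th j x + CC j \<ge> 0" using CCt[of j] by linarith
  then show ?thesis unfolding vv_def by (rule act_range)
qed

lemma pen_one_bad:
  assumes x: "x \<in> X" and j: "j1 < m" "j2 < m" and p: "pv i j1 x > 0" "pv i j2 x > 0"
  shows "j1 = j2"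
proof (rule ccontr)
  assume ne: "j1 \<noteq> j2"
  have near: "\<exists>z::int. \<bar>sv i j x - of_int z\<bar> < 1/(4*real m)" if "pv i j x > 0" for j
  proof -
    have "clamp (2 - sigma1 (2 * sv i j x) / (2*r)) > 0" using that unfolding pv_def z2_def tv_def .
    from pen_pos_near[OF r_pos this] show ?thesis unfolding r_def by (simp add: field_simps)
  qed
  obtain z1 z2 where z: "\<bar>sv i j1 x - of_int z1\<bar> < 1/(4*real m)" "\<bar>sv i j2 x - of_int z2\<bar> < 1/(4*real m)"
    using near[OF p(1)] near[OF p(2)] by blast
  show False
  proof (cases "j1 < j2")
    case True
    show False by (rule two_near_impossible[OF True j(2) z sv_diff])
  next
    case False
    then have "j2 < j1" using ne by simp
    show False by (rule two_near_impossible[OF \<open>j2 < j1\<close> j(1) z(2) z(1) sv_diff])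
  qed
qed

lemma exists_good: "x \<in> X \<Longrightarrow> \<exists>j<m. \<forall>i<D. pv i j x = 0"
proof (rule ccontr)
  assume x: "x \<in> X" and ng: "\<not> (\<exists>j<m. \<forall>i<D. pv i j x = 0)"
  define bad where "bad i = {j. j < m \<and> pv i j x > 0}" for i
  have sub: "{..<m} \<subseteq> (\<Union>i<D. bad i)"
  proof
    fix j assume "j \<in> {..<m}"
    then obtain i where "i < D" "pv i j x \<noteq> 0" using ng by auto
    then have "pv i j x > 0" using pv_range[of i j x] by simp
    then show "j \<in> (\<Union>i<D. bad i)" using \<open>i < D\<close> \<open>j \<in> {..<m}\<close> unfolding bad_def by auto
  qed
  have cb: "card (bad i) \<le> 1" for i
  proof -
    have "finite (bad i)" unfolding bad_def by simp
    moreover have "\<forall>j1\<in>bad i. \<forall>j2\<in>bad i. j1 = j2" unfolding bad_def using pen_one_bad[OF x] by blast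
    ultimately show ?thesis using card_le_Suc0_iff_eq by (metis One_nat_def)
  qed
  have "m = card {..<m}" by simp
  also have "\<dots> \<le> card (\<Union>i<D. bad i)" using sub by (intro card_mono) (auto simp: bad_def)
  also have "\<dots> \<le> (\<Sum>i<D. card (bad i))" by (rule card_UN_le) simp
  also have "\<dots> \<le> (\<Sum>i<D. 1)" by (intro sum_mono cb)
  also have "\<dots> = D" by simp
  finally show False using m_def by simp
qed

lemma SS_ge1: "x \<in> X \<Longrightarrow> 1 \<le> SS x"
proof -
  assume x: "x \<in> X"
  obtain j0 where j0: "j0 < m" "\<forall>i<D. pv i j0 x = 0" using exists_good[OF x] by blast
  have "sp j0 x = 0" unfolding sp_def using j0 by simp
  then have "rho j0 x = 1" unfolding rho_def by simp
  have "rho j0 x \<le> SS x" unfolding SS_def using j0(1) rho_range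
    by (intro member_le_sum) auto
  then show ?thesis using \<open>rho j0 x = 1\<close> by simp
qed

lemma SS_le: "SS x \<le> real m"
proof -
  have "SS x \<le> (\<Sum>j<m. 1)" unfolding SS_def by (intro sum_mono) (simp add: rho_range)
  then show ?thesis by simp
qed

lemma RR_eq: "x \<in> X \<Longrightarrow> RR x = 1 / SS x"
  unfolding RR_def using SS_ge1 act_recip[of "SS x - 1"] by simp

lemma PP_range: "x \<in> X \<Longrightarrow> 0 \<le> PP x \<and> PP x \<le> SS x"
proof -
  assume x: "x \<in> X"
  have "0 \<le> PP x" unfolding PP_def using vv_range[OF x] rho_range by (auto intro!: sum_nonneg)
  moreover have "PP x \<le> SS x" unfolding PP_def SS_def using vv_range[OF x] rho_range
    by (intro sum_mono) (auto intro: mult_left_le)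
  ultimately show ?thesis by simp
qed

lemma FF_eq: "x \<in> X \<Longrightarrow> FF x = PP x / SS x"
  unfolding FF_def RR_eq by simp

lemma FF_range: "x \<in> X \<Longrightarrow> 0 \<le> FF x \<and> FF x \<le> 1"
proof -
  assume x: "x \<in> X"
  have s: "SS x > 0" using SS_ge1[OF x] by simp
  show ?thesis unfolding FF_eq[OF x] using PP_range[OF x] s by (simp add: divide_le_eq_1)
qed

lemma fl_range: "x \<in> X \<Longrightarrow> j < m \<Longrightarrow> 1 \<le> fl i j x \<and> fl i j x \<le> int n + 2"
proof -
  assume a: "x \<in> X" "j < m"
  have "1 \<le> sv i j x" "sv i j x \<le> real n + 2" using sv_bounds[OF a] by auto
  then show ?thesis unfolding fl_def by (auto simp: le_floor_iff floor_le_iff)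
qed

lemma good_Kn:
  assumes x: "x \<in> X" and j: "j < m" and rp: "rho j x > 0"
  shows "Kn j x = real (code j x)"
proof -
  have sp1: "sp j x < 1" using rp unfolding rho_def by (cases "sp j x < 1") auto
  have kf: "kap i j x = real_of_int (fl i j x)" if i: "i < D" for i
  proof -
    have "pv i j x \<le> sp j x" unfolding sp_def using i pv_range by (intro member_le_sum) auto
    then have "clamp (2 - sigma1 (2 * sv i j x) / (2*r)) < 1" using sp1 unfolding pv_def z2_def tv_def by simp
    from floor_recover[OF r_pos r_le this]
    show ?thesis unfolding kap_def frv_def uv_def piv_def z1_def wv_def fl_def .
  qed
  have "Kn j x = 1 + (\<Sum>i<D. real_of_int (fl i j x) * real (n+3)^i)"
    unfolding Kn_def using kf by simp
  also have "\<dots> = real (code j x)"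
  proof -
    have "real_of_int (fl i j x) = real (nat (fl i j x))" if "i < D" for i
      using fl_range[OF x j, of i] by simp
    then show ?thesis unfolding code_def by simp
  qed
  finally show ?thesis .
qed

definition "Mc = 1 + (\<Sum>i<D. (n+2) * (n+3)^i)"

lemma code_range: "x \<in> X \<Longrightarrow> j < m \<Longrightarrow> 1 \<le> code j x \<and> code j x \<le> Mc"
proof -
  assume a: "x \<in> X" "j < m"
  have "nat (fl i j x) \<le> n + 2" for i using fl_range[OF a, of i] by linarith
  then have "(\<Sum>i<D. nat (fl i j x) * (n+3)^i) \<le> (\<Sum>i<D. (n+2) * (n+3)^i)"
    by (intro sum_mono mult_right_mono) auto
  then show ?thesis unfolding code_def Mc_def by simp
qed

lemma code_close:
  assumes x: "x \<in> X" "x' \<in> X" and j: "j < m" and c: "code j x = code j x'" and i: "i < D"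
  shows "\<bar>x$(cd i) - x'$(cd i)\<bar> < (b - a) / real n"
proof -
  have lt: "\<forall>i<D. nat (fl i j y) < n + 3" if "y \<in> X" for y
  proof (intro allI impI)
    fix i assume "i < D"
    have "1 \<le> fl i j y" "fl i j y \<le> int n + 2" using fl_range[OF that j, of i] by auto
    then show "nat (fl i j y) < n + 3" by linarith
  qed
  have "(\<Sum>i<D. nat (fl i j x) * (n+3)^i) = (\<Sum>i<D. nat (fl i j x') * (n+3)^i)"
    using c unfolding code_def by simp
  from digits_inj[OF lt[OF x(1)] lt[OF x(2)] this] i have "nat (fl i j x) = nat (fl i j x')" by blast
  then have "fl i j x = fl i j x'" using fl_range[OF x(1) j, of i] fl_range[OF x(2) j, of i]
    by (metis eq_nat_nat_iff order_trans zero_le_one)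
  then have "\<bar>sv i j x - sv i j x'\<bar> < 1" unfolding fl_def by linarith
  moreover have "sv i j x - sv i j x' = real n * (x$(cd i) - x'$(cd i)) / (b - a)"
  proof -
    have "sv i j x - sv i j x' = real n * (x$(cd i) - a)/(b - a) - real n * (x'$(cd i) - a)/(b - a)"
      unfolding sv_def by simp
    also have "\<dots> = (real n * (x$(cd i) - a) - real n * (x'$(cd i) - a))/(b - a)"
      by (simp add: diff_divide_distrib)
    also have "real n * (x$(cd i) - a) - real n * (x'$(cd i) - a) = real n * (x$(cd i) - x'$(cd i))"
      by (simp add: algebra_simps)
    finally show ?thesis .
  qed
  ultimately have "real n * \<bar>x$(cd i) - x'$(cd i)\<bar> / (b - a) < 1" using ab by (simp add: abs_mult abs_divide)
  then show ?thesis using ab n1 by (simp add: field_simps)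
qed

end

lemma aff_act: "aff_on N X h (\<lambda>x. act (g x)) \<Longrightarrow> (\<And>x. x \<in> X \<Longrightarrow> f x = c * act (g x) + d) \<Longrightarrow> aff_on N X h f"
  by (rule aff_cong[OF aff_add[OF aff_scale aff_const]]) auto

lemma aff_if: "aff_on N X h f \<Longrightarrow> aff_on N X h g \<Longrightarrow> aff_on N X h (if P then f else g)"
  by simp

lemma affi_if: "aff_in X f \<Longrightarrow> aff_in X g \<Longrightarrow> aff_in X (if P then f else g)"
  by simp

lemma act_abs1: "\<bar>z\<bar> \<le> 1 \<Longrightarrow> act (z + 2) = \<bar>z\<bar>"
  using act_abs[of z 1] by simp

lemma carry_to:
  assumes "real_at N h k" "aff_on N X h F" "\<And>x. x \<in> X \<Longrightarrow> 0 \<le> F x \<and> F x \<le> 1" "8*m*m \<le> N" "k \<le> l" "0 < m"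
  shows "\<exists>h. real_at N h l \<and> aff_on N X h F"
  using assms(5)
proof (induction l)
  case 0 then show ?case using assms(1,2) by auto
next
  case (Suc l)
  show ?case
  proof (cases "k = Suc l")
    case True then show ?thesis using assms(1,2) by auto
  next
    case False
    then have "k \<le> l" using Suc.prems by simp
    then obtain h' where h': "real_at N h' l" "aff_on N X h' F" using Suc.IH by blast
    obtain h'' where h'': "real_at N h'' (Suc l)" "\<forall>s<(8::nat). \<forall>i<m. \<forall>j<m. aff_on N X h'' (\<lambda>x. act ((\<lambda>s i j. F) s i j x))"
      using step_lab[OF h'(1) assms(4), where X=X and Gl="\<lambda>s i j. F"] h'(2) by blast
    have m: "0 < m" by (rule assms(6))
    have "aff_on N X h'' (\<lambda>x. act (F x))" using h''(2)[rule_format, of 0 0 0] m by simp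
    then have "aff_on N X h'' F" by (rule aff_act[where c=1 and d=0]) (simp add: act_id assms(3))
    then show ?thesis using h''(1) by blast
  qed
qed

context netc
begin

definition "Bz = 2 + 1/r"

lemma z_bounds: "\<bar>z1 i j x\<bar> \<le> Bz" "\<bar>z1 i j x - 1\<bar> \<le> Bz" "\<bar>z2 i j x\<bar> \<le> Bz" "\<bar>z2 i j x - 1\<bar> \<le> Bz"
proof -
  have r: "r > 0" by (rule r_pos)
  have w: "\<bar>wv i j x - 1/2\<bar> \<le> 1/2" using wv_range[of i j x] by (subst abs_le_iff) auto
  have "\<bar>(wv i j x - 1/2)/(2*r)\<bar> = \<bar>wv i j x - 1/2\<bar>/(2*r)" using r by (simp add: abs_divide)
  also have "\<dots> \<le> (1/2)/(2*r)" using w r by (intro divide_right_mono) auto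
  also have "\<dots> \<le> 1/r" using r by (simp add: field_simps)
  finally have a: "\<bar>(wv i j x - 1/2)/(2*r)\<bar> \<le> 1/r" .
  have t: "0 \<le> tv i j x / (2*r)" "tv i j x / (2*r) \<le> 1/r"
    using tv_range[of i j x] r by (auto simp: field_simps)
  have a1: "(wv i j x - 1/2)/(2*r) \<le> 1/r" "-(1/r) \<le> (wv i j x - 1/2)/(2*r)"
    using a unfolding abs_le_iff by linarith+
  have rr: "1/r > 0" using r by simp
  show "\<bar>z1 i j x\<bar> \<le> Bz" "\<bar>z1 i j x - 1\<bar> \<le> Bz"
    unfolding z1_def Bz_def abs_le_iff using a1 rr by (intro conjI; linarith)+
  show "\<bar>z2 i j x\<bar> \<le> Bz" "\<bar>z2 i j x - 1\<bar> \<le> Bz"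
    unfolding z2_def Bz_def abs_le_iff using t rr by (intro conjI; linarith)+
qed

lemma Bz_pos: "Bz > 0"
proof -
  have "1/r > 0" using r_pos by simp
  then show ?thesis unfolding Bz_def by linarith
qed

lemma clamp_act: "\<bar>z\<bar> \<le> Bz \<Longrightarrow> \<bar>z - 1\<bar> \<le> Bz \<Longrightarrow>
   clamp z = (Bz * act (z / Bz + 2) - Bz * act ((z - 1) / Bz + 2) + 1) / 2"
  unfolding clamp_def using act_abs[OF _ Bz_pos, of z] act_abs[OF _ Bz_pos, of "z - 1"] by simp

lemma network:
  assumes N: "8*m*m \<le> N" and L: "L \<ge> 9"
  shows "\<exists>h. real_at N h (L - 1) \<and> aff_on N X h FF"
proof -
  have Dm: "D < m" using m_def by simp
  define G0 :: "nat \<Rightarrow> nat \<Rightarrow> nat \<Rightarrow> real^'d \<Rightarrow> real" where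
    "G0 s i j = (if s = 0 then sv i j else if s = 1 then (\<lambda>x. sv i j x + 3/2)
       else if s = 2 then (\<lambda>x. 2 * sv i j x) else if s = 3 then (\<lambda>x. sv i j x / (real n + 3))
       else (\<lambda>x. 0))" for s i j
  have affsv: "aff_in X (sv i j)" for i j
  proof -
    have "aff_in X (\<lambda>x. real n * (x$(cd i) - a))" by (intro affi_scale affi_diff affi_coord affi_const)
    then have "aff_in X (\<lambda>x. real n * (x$(cd i) - a) / (b - a))" by (rule affi_divide)
    then have "aff_in X (\<lambda>x. real n * (x$(cd i) - a) / (b - a) + 2 - real j / real m)"
      by (intro affi_diff affi_add affi_const)
    then show ?thesis unfolding sv_def[abs_def] .
  qed
  have "aff_in X (G0 s i j)" for s i j
    unfolding G0_def by (intro affi_if affsv affi_add affi_scale affi_divide affi_const)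
  then obtain h0 where h0: "real_at N h0 0" "\<forall>s<8. \<forall>i<m. \<forall>j<m. aff_on N X h0 (\<lambda>x. act (G0 s i j x))"
    using base_lab[OF N, of X G0] by blast
  note L0 = h0(2)[rule_format]
  have sv0: "0 \<le> sv i j x" if "x \<in> X" "j < m" for i j x using sv_bounds[OF that, of i] by linarith
  have svn: "0 \<le> sv i j x / (real n + 3)" "sv i j x / (real n + 3) \<le> 1" if "x \<in> X" "j < m" for i j x
    using sv_bounds[OF that, of i] by (auto simp: field_simps)
  have svc: "(real n + 3) * act (sv i j x / (real n + 3)) = sv i j x" if "x \<in> X" "j < m" for i j x
    using act_id[OF svn[OF that, of i]] by simp
  have A0u: "aff_on N X h0 (uv i j)" if "i < m" "j < m" for i j
  proof (rule aff_act[where c=1 and d=0, of N X h0 "G0 0 i j"])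
    show "aff_on N X h0 (\<lambda>x. act (G0 0 i j x))" using L0[of 0 i j] that by simp
  qed (use that in \<open>auto simp: G0_def uv_def act_pos sv0\<close>)
  have A0w: "aff_on N X h0 (wv i j)" if "i < m" "j < m" for i j
  proof (rule aff_act[where c=1 and d=0, of N X h0 "G0 1 i j"])
    show "aff_on N X h0 (\<lambda>x. act (G0 1 i j x))" using L0[of 1 i j] that by simp
  qed (use that in \<open>auto simp: G0_def wv_def act_pos sv0 add_nonneg_nonneg\<close>)
  have A0t: "aff_on N X h0 (tv i j)" if "i < m" "j < m" for i j
  proof (rule aff_act[where c=1 and d=0, of N X h0 "G0 2 i j"])
    show "aff_on N X h0 (\<lambda>x. act (G0 2 i j x))" using L0[of 2 i j] that by simp
  qed (use that in \<open>auto simp: G0_def tv_def act_pos sv0\<close>)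
  have A0s: "aff_on N X h0 (sv i j)" if "i < m" "j < m" for i j
  proof (rule aff_act[where c="real n + 3" and d=0, of N X h0 "G0 3 i j"])
    show "aff_on N X h0 (\<lambda>x. act (G0 3 i j x))" using L0[of 3 i j] that by simp
  qed (use that in \<open>auto simp: G0_def svc\<close>)
  have A0z1: "aff_on N X h0 (z1 i j)" if "i < m" "j < m" for i j
  proof -
    have "aff_on N X h0 (\<lambda>x. 1/2 + (wv i j x - 1/2)/(2*r))" by (intro aff_intros A0w that)
    then show ?thesis by (rule aff_cong) (simp add: z1_def)
  qed
  have A0z2: "aff_on N X h0 (z2 i j)" if "i < m" "j < m" for i j
  proof -
    have "aff_on N X h0 (\<lambda>x. 2 - tv i j x/(2*r))" by (intro aff_intros A0t that)
    then show ?thesis by (rule aff_cong) (simp add: z2_def)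
  qed
  define G1 :: "nat \<Rightarrow> nat \<Rightarrow> nat \<Rightarrow> real^'d \<Rightarrow> real" where
    "G1 s i j = (if s = 0 then (\<lambda>x. z1 i j x / Bz + 2) else if s = 1 then (\<lambda>x. (z1 i j x - 1) / Bz + 2)
       else if s = 2 then (\<lambda>x. z2 i j x / Bz + 2) else if s = 3 then (\<lambda>x. (z2 i j x - 1) / Bz + 2)
       else if s = 4 then uv i j else if s = 5 then (\<lambda>x. sv i j x / (real n + 3)) else (\<lambda>x. 0))" for s i j
  have "aff_on N X h0 (G1 s i j)" if "s < 8" "i < m" "j < m" for s i j
    unfolding G1_def by (intro aff_if aff_intros A0z1 A0z2 A0u A0s that)
  then obtain h1 where h1: "real_at N h1 (Suc 0)" "\<forall>s<(8::nat). \<forall>i<m. \<forall>j<m. aff_on N X h1 (\<lambda>x. act (G1 s i j x))"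
    using step_lab[OF h0(1) N, where X=X and Gl=G1] by blast
  note L1 = h1(2)[rule_format]
  have A1pi: "aff_on N X h1 (piv i j)" if "i < m" "j < m" for i j
  proof -
    have "aff_on N X h1 (\<lambda>x. (Bz * act (G1 0 i j x) - Bz * act (G1 1 i j x) + 1) / 2)"
      by (intro aff_intros L1 that) auto
    then show ?thesis by (rule aff_cong) (simp add: G1_def piv_def clamp_act[OF z_bounds(1,2)])
  qed
  have A1p: "aff_on N X h1 (pv i j)" if "i < m" "j < m" for i j
  proof -
    have "aff_on N X h1 (\<lambda>x. (Bz * act (G1 2 i j x) - Bz * act (G1 3 i j x) + 1) / 2)"
      by (intro aff_intros L1 that) auto
    then show ?thesis by (rule aff_cong) (simp add: G1_def pv_def clamp_act[OF z_bounds(3,4)])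
  qed
  have A1u: "aff_on N X h1 (uv i j)" if "i < m" "j < m" for i j
  proof (rule aff_act[where c=1 and d=0, of N X h1 "G1 4 i j"])
    show "aff_on N X h1 (\<lambda>x. act (G1 4 i j x))" using L1[of 4 i j] that by simp
  qed (use that in \<open>auto simp: G1_def act_id uv_range\<close>)
  have A1s: "aff_on N X h1 (sv i j)" if "i < m" "j < m" for i j
  proof (rule aff_act[where c="real n + 3" and d=0, of N X h1 "G1 5 i j"])
    show "aff_on N X h1 (\<lambda>x. act (G1 5 i j x))" using L1[of 5 i j] that by simp
  qed (use that in \<open>auto simp: G1_def svc\<close>)
  have A1sp: "aff_on N X h1 (sp j)" if "j < m" for j
  proof -
    have "aff_on N X h1 (\<lambda>x. \<Sum>i<D. pv i j x)" using Dm that by (intro aff_sum A1p) auto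
    then show ?thesis by (rule aff_cong) (simp add: sp_def)
  qed
  define G2 :: "nat \<Rightarrow> nat \<Rightarrow> nat \<Rightarrow> real^'d \<Rightarrow> real" where
    "G2 s i j = (if s = 0 then (\<lambda>x. uv i j x - piv i j x + 2) else if s = 1 then (\<lambda>x. sv i j x / (real n + 3))
       else if s = 2 then (\<lambda>x. (1 - sp j x) / (real D + 1) + 2) else if s = 3 then (\<lambda>x. sp j x / (real D + 1))
       else (\<lambda>x. 0))" for s i j
  have "aff_on N X h1 (G2 s i j)" if "s < 8" "i < m" "j < m" for s i j
    unfolding G2_def by (intro aff_if aff_intros A1u A1pi A1s A1sp that)
  then obtain h2 where h2: "real_at N h2 (Suc (Suc 0))" "\<forall>s<(8::nat). \<forall>i<m. \<forall>j<m. aff_on N X h2 (\<lambda>x. act (G2 s i j x))"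
    using step_lab[OF h1(1) N, where X=X and Gl=G2] by blast
  note L2 = h2(2)[rule_format]
  have m0: "0 < m" using Dm by simp
  have frb: "\<bar>uv i j x - piv i j x\<bar> \<le> 1" for i j x using uv_range[of i j x] piv_range[of i j x] by auto
  have A2fr: "aff_on N X h2 (frv i j)" if "i < m" "j < m" for i j
  proof (rule aff_act[where c=1 and d=0, of N X h2 "G2 0 i j"])
    show "aff_on N X h2 (\<lambda>x. act (G2 0 i j x))" using L2[of 0 i j] that by simp
  qed (use that in \<open>auto simp: G2_def frv_def act_abs1[OF frb]\<close>)
  have A2s: "aff_on N X h2 (sv i j)" if "i < m" "j < m" for i j
  proof (rule aff_act[where c="real n + 3" and d=0, of N X h2 "G2 1 i j"])
    show "aff_on N X h2 (\<lambda>x. act (G2 1 i j x))" using L2[of 1 i j] that by simp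
  qed (use that in \<open>auto simp: G2_def svc\<close>)
  have A2kap: "aff_on N X h2 (kap i j)" if "i < m" "j < m" for i j
  proof -
    have "aff_on N X h2 (\<lambda>x. sv i j x - frv i j x)" by (intro aff_intros A2s A2fr that)
    then show ?thesis by (rule aff_cong) (simp add: kap_def)
  qed
  have spc: "(real D + 1) * act (sp j x / (real D + 1)) = sp j x" for j x
  proof -
    have "0 \<le> sp j x / (real D + 1)" "sp j x / (real D + 1) \<le> 1" using sp_range[of j x] by (auto simp: field_simps)
    then show ?thesis by (simp add: act_id)
  qed
  have rhoc: "rho j x = ((1 - sp j x) + (real D + 1) * act ((1 - sp j x) / (real D + 1) + 2)) / 2" for j x
  proof -
    have "\<bar>1 - sp j x\<bar> \<le> real D + 1" using sp_range[of j x] by auto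
    from act_abs[OF this] have "(real D + 1) * act ((1 - sp j x) / (real D + 1) + 2) = \<bar>1 - sp j x\<bar>" by simp
    then show ?thesis unfolding rho_def by simp
  qed
  have A2sp: "aff_on N X h2 (sp j)" if "j < m" for j
  proof (rule aff_act[where c="real D + 1" and d=0, of N X h2 "G2 3 0 j"])
    show "aff_on N X h2 (\<lambda>x. act (G2 3 0 j x))" using L2[of 3 0 j] that m0 by simp
  qed (simp add: G2_def spc)
  have A2rho: "aff_on N X h2 (rho j)" if "j < m" for j
  proof -
    have "aff_on N X h2 (\<lambda>x. ((1 - sp j x) + (real D + 1) * act (G2 2 0 j x)) / 2)"
      using L2[of 2 0 j] that m0 by (intro aff_intros A2sp that) auto
    then show ?thesis by (rule aff_cong) (simp add: G2_def rhoc)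
  qed
  have A2Kn: "aff_on N X h2 (Kn j)" if "j < m" for j
  proof -
    have "aff_on N X h2 (\<lambda>x. 1 + (\<Sum>i<D. kap i j x * real (n+3)^i))"
      using Dm that by (intro aff_intros A2kap) auto
    then show ?thesis by (rule aff_cong) (simp add: Kn_def)
  qed
  define G3 :: "nat \<Rightarrow> nat \<Rightarrow> nat \<Rightarrow> real^'d \<Rightarrow> real" where
    "G3 s i j = (if s = 0 then (\<lambda>x. -(bb j * Kn j x)) else if s = 1 then rho j
       else if s = 2 then (\<lambda>x. -(SS x - 1)) else (\<lambda>x. 0))" for s i j
  have A2S: "aff_on N X h2 SS"
  proof -
    have "aff_on N X h2 (\<lambda>x. \<Sum>j<m. rho j x)" by (intro aff_sum A2rho) auto
    then show ?thesis by (rule aff_cong) (simp add: SS_def)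
  qed
  have "aff_on N X h2 (G3 s i j)" if "s < 8" "i < m" "j < m" for s i j
    unfolding G3_def by (intro aff_if aff_intros A2Kn A2rho A2S that)
  then obtain h3 where h3: "real_at N h3 (Suc (Suc (Suc 0)))" "\<forall>s<(8::nat). \<forall>i<m. \<forall>j<m. aff_on N X h3 (\<lambda>x. act (G3 s i j x))"
    using step_lab[OF h2(1) N, where X=X and Gl=G3] by blast
  note L3 = h3(2)[rule_format]
  have A3th: "aff_on N X h3 (th j)" if "j < m" for j
  proof (rule aff_act[where c=1 and d=1, of N X h3 "G3 0 0 j"])
    show "aff_on N X h3 (\<lambda>x. act (G3 0 0 j x))" using L3[of 0 0 j] that m0 by simp
  qed (simp add: G3_def th_def)
  have A3rho: "aff_on N X h3 (rho j)" if "j < m" for j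
  proof (rule aff_act[where c=1 and d=0, of N X h3 "G3 1 0 j"])
    show "aff_on N X h3 (\<lambda>x. act (G3 1 0 j x))" using L3[of 1 0 j] that m0 by simp
  qed (simp add: G3_def act_id rho_range)
  have A3R: "aff_on N X h3 RR"
  proof (rule aff_act[where c=1 and d=1, of N X h3 "G3 2 0 0"])
    show "aff_on N X h3 (\<lambda>x. act (G3 2 0 0 x))" using L3[of 2 0 0] m0 by simp
  qed (simp add: G3_def RR_def)
  define G4 :: "nat \<Rightarrow> nat \<Rightarrow> nat \<Rightarrow> real^'d \<Rightarrow> real" where
    "G4 s i j = (if s = 0 then (\<lambda>x. 2 * tt j * th j x + CC j) else if s = 1 then rho j
       else if s = 2 then RR else (\<lambda>x. 0))" for s i j
  have "aff_on N X h3 (G4 s i j)" if "s < 8" "i < m" "j < m" for s i j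
    unfolding G4_def by (intro aff_if aff_intros A3th A3rho A3R that)
  then obtain h4 where h4: "real_at N h4 (Suc (Suc (Suc (Suc 0))))" "\<forall>s<(8::nat). \<forall>i<m. \<forall>j<m. aff_on N X h4 (\<lambda>x. act (G4 s i j x))"
    using step_lab[OF h3(1) N, where X=X and Gl=G4] by blast
  note L4 = h4(2)[rule_format]
  have RRr: "0 < RR x \<and> RR x \<le> 1" if "x \<in> X" for x
    using SS_ge1[OF that] unfolding RR_eq[OF that] by (simp add: field_simps)
  have A4v: "aff_on N X h4 (vv j)" if "j < m" for j
  proof (rule aff_act[where c=1 and d=0, of N X h4 "G4 0 0 j"])
    show "aff_on N X h4 (\<lambda>x. act (G4 0 0 j x))" using L4[of 0 0 j] that m0 by simp
  qed (simp add: G4_def vv_def)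
  have A4rho: "aff_on N X h4 (rho j)" if "j < m" for j
  proof (rule aff_act[where c=1 and d=0, of N X h4 "G4 1 0 j"])
    show "aff_on N X h4 (\<lambda>x. act (G4 1 0 j x))" using L4[of 1 0 j] that m0 by simp
  qed (simp add: G4_def act_id rho_range)
  have A4R: "aff_on N X h4 RR"
  proof (rule aff_act[where c=1 and d=0, of N X h4 "G4 2 0 0"])
    show "aff_on N X h4 (\<lambda>x. act (G4 2 0 0 x))" using L4[of 2 0 0] m0 by simp
  qed (simp add: G4_def act_id RRr less_imp_le)
  \<comment> \<open>Layer 5: first half of the product rho * v\<close>
  define X1 where "X1 j x = rho j x + vv j x + 4" for j x
  define X2 where "X2 j x = rho j x - vv j x + 4" for j x
  have A4X1: "aff_on N X h4 (X1 j)" if "j < m" for j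
  proof -
    have "aff_on N X h4 (\<lambda>x. rho j x + vv j x + 4)" by (intro aff_intros A4rho A4v that)
    then show ?thesis by (rule aff_cong) (simp add: X1_def)
  qed
  have A4X2: "aff_on N X h4 (X2 j)" if "j < m" for j
  proof -
    have "aff_on N X h4 (\<lambda>x. rho j x - vv j x + 4)" by (intro aff_intros A4rho A4v that)
    then show ?thesis by (rule aff_cong) (simp add: X2_def)
  qed
  define G5 :: "nat \<Rightarrow> nat \<Rightarrow> nat \<Rightarrow> real^'d \<Rightarrow> real" where
    "G5 s i j = (if s = 0 then (\<lambda>x. -(X1 j x / 2 - 1)) else if s = 1 then (\<lambda>x. -((X1 j x + 1) / 3 - 1))
       else if s = 2 then (\<lambda>x. -(X2 j x / 2 - 1)) else if s = 3 then (\<lambda>x. -((X2 j x + 1) / 3 - 1))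
       else if s = 4 then rho j else if s = 5 then vv j else if s = 6 then RR else (\<lambda>x. 0))" for s i j
  have "aff_on N X h4 (G5 s i j)" if "s < 8" "i < m" "j < m" for s i j
    unfolding G5_def by (intro aff_if aff_intros A4X1 A4X2 A4rho A4v A4R that)
  then obtain h5 where h5: "real_at N h5 (Suc (Suc (Suc (Suc (Suc 0)))))" "\<forall>s<(8::nat). \<forall>i<m. \<forall>j<m. aff_on N X h5 (\<lambda>x. act (G5 s i j x))"
    using step_lab[OF h4(1) N, where X=X and Gl=G5] by blast
  note L5 = h5(2)[rule_format]
  have A5Q1: "aff_on N X h5 (\<lambda>x. Qf (X1 j x))" if "j < m" for j
  proof -
    have "aff_on N X h5 (\<lambda>x. (1 + act (G5 0 0 j x)) / 2 - (1 + act (G5 1 0 j x)) / 3)"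
      using L5[of 0 0 j] L5[of 1 0 j] that m0 by (intro aff_intros) auto
    then show ?thesis by (rule aff_cong) (simp add: G5_def Qf_def)
  qed
  have A5Q2: "aff_on N X h5 (\<lambda>x. Qf (X2 j x))" if "j < m" for j
  proof -
    have "aff_on N X h5 (\<lambda>x. (1 + act (G5 2 0 j x)) / 2 - (1 + act (G5 3 0 j x)) / 3)"
      using L5[of 2 0 j] L5[of 3 0 j] that m0 by (intro aff_intros) auto
    then show ?thesis by (rule aff_cong) (simp add: G5_def Qf_def)
  qed
  have A5rho: "aff_on N X h5 (rho j)" if "j < m" for j
  proof (rule aff_act[where c=1 and d=0, of N X h5 "G5 4 0 j"])
    show "aff_on N X h5 (\<lambda>x. act (G5 4 0 j x))" using L5[of 4 0 j] that m0 by simp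
  qed (simp add: G5_def act_id rho_range)
  have A5v: "aff_on N X h5 (vv j)" if "j < m" for j
  proof (rule aff_act[where c=1 and d=0, of N X h5 "G5 5 0 j"])
    show "aff_on N X h5 (\<lambda>x. act (G5 5 0 j x))" using L5[of 5 0 j] that m0 by simp
  qed (use that vv_range in \<open>simp add: G5_def act_id\<close>)
  have A5R: "aff_on N X h5 RR"
  proof (rule aff_act[where c=1 and d=0, of N X h5 "G5 6 0 0"])
    show "aff_on N X h5 (\<lambda>x. act (G5 6 0 0 x))" using L5[of 6 0 0] m0 by simp
  qed (simp add: G5_def act_id RRr less_imp_le)
  \<comment> \<open>Layer 6: second half of the product\<close>
  define c1 :: real where "c1 = 1 / (6 * (6 + 1))"
  define G6 :: "nat \<Rightarrow> nat \<Rightarrow> nat \<Rightarrow> real^'d \<Rightarrow> real" where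
    "G6 s i j = (if s = 0 then (\<lambda>x. -(Qf (X1 j x) / c1 - 1)) else if s = 1 then (\<lambda>x. -(Qf (X2 j x) / c1 - 1))
       else if s = 2 then rho j else if s = 3 then vv j else if s = 4 then RR else (\<lambda>x. 0))" for s i j
  have "aff_on N X h5 (G6 s i j)" if "s < 8" "i < m" "j < m" for s i j
    unfolding G6_def by (intro aff_if aff_intros A5Q1 A5Q2 A5rho A5v A5R that)
  then obtain h6 where h6: "real_at N h6 (Suc (Suc (Suc (Suc (Suc (Suc 0))))))" "\<forall>s<(8::nat). \<forall>i<m. \<forall>j<m. aff_on N X h6 (\<lambda>x. act (G6 s i j x))"
    using step_lab[OF h5(1) N, where X=X and Gl=G6] by blast
  note L6 = h6(2)[rule_format]
  have A6rho: "aff_on N X h6 (rho j)" if "j < m" for j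
  proof (rule aff_act[where c=1 and d=0, of N X h6 "G6 2 0 j"])
    show "aff_on N X h6 (\<lambda>x. act (G6 2 0 j x))" using L6[of 2 0 j] that m0 by simp
  qed (simp add: G6_def act_id rho_range)
  have A6v: "aff_on N X h6 (vv j)" if "j < m" for j
  proof (rule aff_act[where c=1 and d=0, of N X h6 "G6 3 0 j"])
    show "aff_on N X h6 (\<lambda>x. act (G6 3 0 j x))" using L6[of 3 0 j] that m0 by simp
  qed (use that vv_range in \<open>simp add: G6_def act_id\<close>)
  have A6R: "aff_on N X h6 RR"
  proof (rule aff_act[where c=1 and d=0, of N X h6 "G6 4 0 0"])
    show "aff_on N X h6 (\<lambda>x. act (G6 4 0 0 x))" using L6[of 4 0 0] m0 by simp
  qed (simp add: G6_def act_id RRr less_imp_le)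
  have A6prod: "aff_on N X h6 (\<lambda>x. rho j x * vv j x)" if j: "j < m" for j
  proof -
    have "aff_on N X h6 (\<lambda>x. ((1 + act (G6 0 0 j x)) / c1 - (rho j x + vv j x + 4)
            - ((1 + act (G6 1 0 j x)) / c1 - (rho j x - vv j x + 4))
            - 8 * ((rho j x + vv j x + 4) - (rho j x - vv j x + 4))) / 4)"
      using L6[of 0 0 j] L6[of 1 0 j] that m0 by (intro aff_intros A6rho A6v that) auto
    then show ?thesis
    proof (rule aff_cong)
      fix x assume x: "x \<in> X"
      have rv: "0 \<le> rho j x" "rho j x \<le> 1" "0 \<le> vv j x" "vv j x \<le> 1"
        using rho_range[of j x] vv_range[OF x j] by auto
      have s1: "(1 + act (- (Qf (X1 j x) / c1 - 1))) / c1 - X1 j x = (X1 j x)^2"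
        by (rule sq_gadget[where Bx=6]) (use rv in \<open>auto simp: X1_def c1_def\<close>)
      have s2: "(1 + act (- (Qf (X2 j x) / c1 - 1))) / c1 - X2 j x = (X2 j x)^2"
        by (rule sq_gadget[where Bx=6]) (use rv in \<open>auto simp: X2_def c1_def\<close>)
      have "((1 + act (G6 0 0 j x)) / c1 - (rho j x + vv j x + 4)
            - ((1 + act (G6 1 0 j x)) / c1 - (rho j x - vv j x + 4))
            - 8 * ((rho j x + vv j x + 4) - (rho j x - vv j x + 4))) / 4
          = ((X1 j x)^2 - (X2 j x)^2 - 8 * (X1 j x - X2 j x)) / 4"
        using s1 s2 unfolding G6_def X1_def X2_def by simp
      also have "\<dots> = rho j x * vv j x" unfolding X1_def X2_def by (simp add: power2_eq_square algebra_simps)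
      finally show "((1 + act (G6 0 0 j x)) / c1 - (rho j x + vv j x + 4)
            - ((1 + act (G6 1 0 j x)) / c1 - (rho j x - vv j x + 4))
            - 8 * ((rho j x + vv j x + 4) - (rho j x - vv j x + 4))) / 4 = rho j x * vv j x" .
    qed
  qed
  have A6P: "aff_on N X h6 PP"
  proof -
    have "aff_on N X h6 (\<lambda>x. \<Sum>j<m. rho j x * vv j x)" by (intro aff_sum A6prod) auto
    then show ?thesis by (rule aff_cong) (simp add: PP_def)
  qed
  \<comment> \<open>Layers 7 and 8: the product PP * RR\<close>
  have PPr: "0 \<le> PP x \<and> PP x \<le> real m" if "x \<in> X" for x
    using PP_range[OF that] SS_le[of x] by auto
  define Y1 where "Y1 x = PP x + RR x + 3" for x
  define Y2 where "Y2 x = PP x - RR x + 3" for x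
  have A6Y1: "aff_on N X h6 Y1"
  proof -
    have "aff_on N X h6 (\<lambda>x. PP x + RR x + 3)" by (intro aff_intros A6P A6R)
    then show ?thesis by (rule aff_cong) (simp add: Y1_def)
  qed
  have A6Y2: "aff_on N X h6 Y2"
  proof -
    have "aff_on N X h6 (\<lambda>x. PP x - RR x + 3)" by (intro aff_intros A6P A6R)
    then show ?thesis by (rule aff_cong) (simp add: Y2_def)
  qed
  define G7 :: "nat \<Rightarrow> nat \<Rightarrow> nat \<Rightarrow> real^'d \<Rightarrow> real" where
    "G7 s i j = (if s = 0 then (\<lambda>x. -(Y1 x / 2 - 1)) else if s = 1 then (\<lambda>x. -((Y1 x + 1) / 3 - 1))
       else if s = 2 then (\<lambda>x. -(Y2 x / 2 - 1)) else if s = 3 then (\<lambda>x. -((Y2 x + 1) / 3 - 1))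
       else if s = 4 then (\<lambda>x. PP x / (real m + 1)) else if s = 5 then RR else (\<lambda>x. 0))" for s i j
  have "aff_on N X h6 (G7 s i j)" if "s < 8" "i < m" "j < m" for s i j
    unfolding G7_def by (intro aff_if aff_intros A6Y1 A6Y2 A6P A6R)
  then obtain h7 where h7: "real_at N h7 (Suc (Suc (Suc (Suc (Suc (Suc (Suc 0)))))))" "\<forall>s<(8::nat). \<forall>i<m. \<forall>j<m. aff_on N X h7 (\<lambda>x. act (G7 s i j x))"
    using step_lab[OF h6(1) N, where X=X and Gl=G7] by blast
  note L7 = h7(2)[rule_format]
  have ppc: "(real m + 1) * act (PP x / (real m + 1)) = PP x" if "x \<in> X" for x
  proof -
    have "0 \<le> PP x / (real m + 1)" "PP x / (real m + 1) \<le> 1" using PPr[OF that] by (auto simp: field_simps)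
    then show ?thesis by (simp add: act_id)
  qed
  have A7Q1: "aff_on N X h7 (\<lambda>x. Qf (Y1 x))"
  proof -
    have "aff_on N X h7 (\<lambda>x. (1 + act (G7 0 0 0 x)) / 2 - (1 + act (G7 1 0 0 x)) / 3)"
      using L7[of 0 0 0] L7[of 1 0 0] m0 by (intro aff_intros) auto
    then show ?thesis by (rule aff_cong) (simp add: G7_def Qf_def)
  qed
  have A7Q2: "aff_on N X h7 (\<lambda>x. Qf (Y2 x))"
  proof -
    have "aff_on N X h7 (\<lambda>x. (1 + act (G7 2 0 0 x)) / 2 - (1 + act (G7 3 0 0 x)) / 3)"
      using L7[of 2 0 0] L7[of 3 0 0] m0 by (intro aff_intros) auto
    then show ?thesis by (rule aff_cong) (simp add: G7_def Qf_def)
  qed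
  have A7P: "aff_on N X h7 PP"
  proof (rule aff_act[where c="real m + 1" and d=0, of N X h7 "G7 4 0 0"])
    show "aff_on N X h7 (\<lambda>x. act (G7 4 0 0 x))" using L7[of 4 0 0] m0 by simp
  qed (simp add: G7_def ppc)
  have A7R: "aff_on N X h7 RR"
  proof (rule aff_act[where c=1 and d=0, of N X h7 "G7 5 0 0"])
    show "aff_on N X h7 (\<lambda>x. act (G7 5 0 0 x))" using L7[of 5 0 0] m0 by simp
  qed (simp add: G7_def act_id RRr less_imp_le)
  define c2 :: real where "c2 = 1 / ((real m + 4) * ((real m + 4) + 1))"
  define G8 :: "nat \<Rightarrow> nat \<Rightarrow> nat \<Rightarrow> real^'d \<Rightarrow> real" where
    "G8 s i j = (if s = 0 then (\<lambda>x. -(Qf (Y1 x) / c2 - 1)) else if s = 1 then (\<lambda>x. -(Qf (Y2 x) / c2 - 1))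
       else if s = 2 then (\<lambda>x. PP x / (real m + 1)) else if s = 3 then RR else (\<lambda>x. 0))" for s i j
  have "aff_on N X h7 (G8 s i j)" if "s < 8" "i < m" "j < m" for s i j
    unfolding G8_def by (intro aff_if aff_intros A7Q1 A7Q2 A7P A7R)
  then obtain h8 where h8: "real_at N h8 (Suc (Suc (Suc (Suc (Suc (Suc (Suc (Suc 0))))))))" "\<forall>s<(8::nat). \<forall>i<m. \<forall>j<m. aff_on N X h8 (\<lambda>x. act (G8 s i j x))"
    using step_lab[OF h7(1) N, where X=X and Gl=G8] by blast
  note L8 = h8(2)[rule_format]
  have A8P: "aff_on N X h8 PP"
  proof (rule aff_act[where c="real m + 1" and d=0, of N X h8 "G8 2 0 0"])
    show "aff_on N X h8 (\<lambda>x. act (G8 2 0 0 x))" using L8[of 2 0 0] m0 by simp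
  qed (simp add: G8_def ppc)
  have A8R: "aff_on N X h8 RR"
  proof (rule aff_act[where c=1 and d=0, of N X h8 "G8 3 0 0"])
    show "aff_on N X h8 (\<lambda>x. act (G8 3 0 0 x))" using L8[of 3 0 0] m0 by simp
  qed (simp add: G8_def act_id RRr less_imp_le)
  have A8F: "aff_on N X h8 FF"
  proof -
    have "aff_on N X h8 (\<lambda>x. (((1 + act (G8 0 0 0 x)) / c2 - (PP x + RR x + 3))
          - ((1 + act (G8 1 0 0 x)) / c2 - (PP x - RR x + 3))) / 4 - 3 * RR x)"
      using L8[of 0 0 0] L8[of 1 0 0] m0 by (intro aff_intros A8P A8R) auto
    then show ?thesis
    proof (rule aff_cong)
      fix x assume x: "x \<in> X"
      have pr: "0 \<le> PP x" "PP x \<le> real m" "0 < RR x" "RR x \<le> 1" using PPr[OF x] RRr[OF x] by auto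
      have s1: "(1 + act (- (Qf (Y1 x) / c2 - 1))) / c2 - Y1 x = (Y1 x)^2"
        by (rule sq_gadget[where Bx="real m + 4"]) (use pr in \<open>auto simp: Y1_def c2_def\<close>)
      have s2: "(1 + act (- (Qf (Y2 x) / c2 - 1))) / c2 - Y2 x = (Y2 x)^2"
        by (rule sq_gadget[where Bx="real m + 4"]) (use pr in \<open>auto simp: Y2_def c2_def\<close>)
      have "(((1 + act (G8 0 0 0 x)) / c2 - (PP x + RR x + 3))
          - ((1 + act (G8 1 0 0 x)) / c2 - (PP x - RR x + 3))) / 4 - 3 * RR x
          = ((Y1 x)^2 - (Y2 x)^2) / 4 - 3 * RR x"
        using s1 s2 unfolding G8_def Y1_def Y2_def by simp
      also have "\<dots> = FF x" unfolding Y1_def Y2_def FF_def by (simp add: power2_eq_square algebra_simps)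
      finally show "(((1 + act (G8 0 0 0 x)) / c2 - (PP x + RR x + 3))
          - ((1 + act (G8 1 0 0 x)) / c2 - (PP x - RR x + 3))) / 4 - 3 * RR x = FF x" .
    qed
  qed
  show ?thesis
    using carry_to[OF h8(1) A8F FF_range N _ m0, of "L - 1"] L by auto
qed

end

context netc
begin

lemma accuracy:
  assumes x: "x \<in> X"
    and tab: "\<And>j K. j < m \<Longrightarrow> K \<in> {1..Mc} \<Longrightarrow> \<bar>act (2*tt j*(1 + act (-(bb j*real K))) + CC j) - \<alpha> j K\<bar> < \<delta>"
    and good: "\<And>j. j < m \<Longrightarrow> \<bar>\<alpha> j (code j x) - g\<bar> \<le> e"
  shows "\<bar>FF x - g\<bar> \<le> \<delta> + e"
proof -
  have vj: "rho j x * \<bar>vv j x - g\<bar> \<le> rho j x * (\<delta> + e)" if j: "j < m" for j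
  proof (cases "rho j x > 0")
    case True
    have "Kn j x = real (code j x)" by (rule good_Kn[OF x j True])
    then have "vv j x = act (2*tt j*(1 + act (-(bb j*real (code j x)))) + CC j)"
      unfolding vv_def th_def by simp
    moreover have "code j x \<in> {1..Mc}" using code_range[OF x j] by auto
    ultimately have "\<bar>vv j x - \<alpha> j (code j x)\<bar> < \<delta>" using tab[OF j] by simp
    then have "\<bar>vv j x - g\<bar> \<le> \<delta> + e" using good[OF j] by linarith
    then show ?thesis using rho_range[of j x] by (intro mult_left_mono) auto
  next
    case False
    then have "rho j x = 0" using rho_range[of j x] by simp
    then show ?thesis by simp
  qed
  have S: "SS x > 0" using SS_ge1[OF x] by simp
  have "FF x - g = (\<Sum>j<m. rho j x * (vv j x - g)) / SS x"
    unfolding FF_eq[OF x] PP_def SS_def using S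
    by (simp add: field_simps sum_distrib_left sum_subtractf SS_def)
  then have "\<bar>FF x - g\<bar> = \<bar>\<Sum>j<m. rho j x * (vv j x - g)\<bar> / SS x" using S by simp
  also have "\<dots> \<le> (\<Sum>j<m. rho j x * \<bar>vv j x - g\<bar>) / SS x"
    using S rho_range by (intro divide_right_mono order_trans[OF sum_abs]) (auto simp: abs_mult)
  also have "\<dots> \<le> (\<Sum>j<m. rho j x * (\<delta> + e)) / SS x"
    using S vj by (intro divide_right_mono sum_mono) auto
  also have "\<dots> = \<delta> + e" using S unfolding SS_def by (simp add: sum_distrib_right[symmetric])
  finally show ?thesis .
qed

end

theorem corollary2:
  fixes a b :: real and N L :: nat and f :: "real^'d::finite \<Rightarrow> real"
  assumes "a < b"
    and "N \<ge> 36 * CARD('d) * (2 * CARD('d) + 1)"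
    and "L \<ge> 11"
    and "continuous_on (cbox (\<chi> i. a) (\<chi> i. b)) f"
    and "\<epsilon> > 0"
  shows "\<exists>\<phi>\<in>H N L. \<forall>x\<in>cbox (\<chi> i. a) (\<chi> i. b). \<bar>f x - \<phi> x\<bar> < \<epsilon>"
proof -
  define X where "X = cbox (\<chi> i. a) (\<chi> i. b :: real^'d)"
  define D where "D = CARD('d)"
  define m where "m = D + 1"
  define r :: real where "r = 1 / (8 * real m)"
  have D1: "D \<ge> 1" unfolding D_def by (simp add: Suc_leI)
  have N: "8*m*m \<le> N"
  proof -
    have "8*m*m = 8*D*D + 16*D + 8" unfolding m_def by (simp add: algebra_simps)
    also have "\<dots> \<le> 72*D*D + 36*D" using D1 by (simp add: mult_le_mono)
    also have "\<dots> = 36 * D * (2 * D + 1)" by (simp add: algebra_simps)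
    finally show ?thesis using assms(2) unfolding D_def by simp
  qed
  obtain cd where cd: "bij_betw cd {..<D} (UNIV :: 'd set)"
    using ex_bij_betw_nat_finite[of "UNIV :: 'd set"] unfolding D_def by (auto simp: atLeast0LessThan)
  have cX: "compact X" unfolding X_def by simp
  obtain B where B: "\<forall>y\<in>f ` X. norm y \<le> B"
    using compact_imp_bounded[OF compact_continuous_image[OF assms(4)[folded X_def] cX]]
    unfolding bounded_iff by blast
  define Mf where "Mf = \<bar>B\<bar> + 1"
  have Mf: "Mf > 0" "\<And>x. x \<in> X \<Longrightarrow> \<bar>f x\<bar> < Mf" unfolding Mf_def using B by force+
  define g where "g x = (f x + Mf) / (2 * Mf)" for x
  have g01: "0 \<le> g x \<and> g x \<le> 1" if "x \<in> X" for x
    using Mf(2)[OF that] Mf(1) unfolding g_def by (auto simp: field_simps abs_less_iff)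
  define \<eta> where "\<eta> = \<epsilon> / (2 * Mf)"
  have eta: "\<eta> > 0" unfolding \<eta>_def using Mf assms(5) by simp
  obtain du where du: "du > 0" "\<forall>x\<in>X. \<forall>x'\<in>X. dist x' x < du \<longrightarrow> dist (f x') (f x) < \<epsilon>/2"
    using compact_uniformly_continuous[OF assms(4)[folded X_def] cX] assms(5)
    unfolding uniformly_continuous_on_def by (meson half_gt_zero)
  define n :: nat where "n = nat \<lceil>real D * (b - a) / du\<rceil> + 1"
  have n1: "n \<ge> 1" unfolding n_def by simp
  have nbig: "real D * (b - a) / real n < du"
  proof -
    have "real D * (b - a) / du < real n" unfolding n_def by linarith
    then show ?thesis using du(1) n1 by (simp add: field_simps)
  qed
  define svE where "svE i j x = real n * (x$(cd i) - a)/(b - a) + 2 - real j / real m" for i j x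
  define codeE where "codeE j x = 1 + (\<Sum>i<D. nat \<lfloor>svE i j x\<rfloor> * (n+3)^i)" for j x
  define McE where "McE = 1 + (\<Sum>i<D. (n+2) * (n+3)^i)"
  define \<alpha> where "\<alpha> j K = (if \<exists>x\<in>X. codeE j x = K then g (SOME x. x \<in> X \<and> codeE j x = K) else 0)" for j K
  have al01: "0 \<le> \<alpha> j K \<and> \<alpha> j K \<le> 1" for j K
  proof (cases "\<exists>x\<in>X. codeE j x = K")
    case True
    then have "(SOME x. x \<in> X \<and> codeE j x = K) \<in> X" by (metis (mono_tags, lifting) someI_ex)
    then show ?thesis using True g01 unfolding \<alpha>_def by simp
  qed (simp add: \<alpha>_def)
  have "\<forall>j. \<exists>bb tt CC. bb > 0 \<and> CC \<ge> 2*\<bar>tt\<bar> \<and>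
     (\<forall>K\<in>{1..McE}. \<bar>act (2*tt*(1 + act (-(bb*real K))) + CC) - \<alpha> j K\<bar> < \<eta>/4)"
  proof
    fix j
    show "\<exists>bb tt CC. bb > 0 \<and> CC \<ge> 2*\<bar>tt\<bar> \<and>
       (\<forall>K\<in>{1..McE}. \<bar>act (2*tt*(1 + act (-(bb*real K))) + CC) - \<alpha> j K\<bar> < \<eta>/4)"
      by (rule lookup) (use al01 eta in auto)
  qed
  then obtain bb tt CC where bt: "\<And>j. bb j > 0" "\<And>j. CC j \<ge> 2*\<bar>tt j\<bar>"
    "\<And>j K. K \<in> {1..McE} \<Longrightarrow> \<bar>act (2*tt j*(1 + act (-(bb j*real K))) + CC j) - \<alpha> j K\<bar> < \<eta>/4"
    by metis
  interpret I: netc a b n D m r cd bb tt CC X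
    by unfold_locales (use assms(1) n1 bt cd in \<open>auto simp: D_def m_def r_def X_def\<close>)
  have codeI: "I.code j x = codeE j x" for j x
    unfolding I.code_def I.fl_def I.sv_def codeE_def svE_def by simp
  have McI: "I.Mc = McE" unfolding I.Mc_def McE_def by simp
  obtain h where h: "real_at N h (L - 1)" "aff_on N X h I.FF"
  proof -
    have "L \<ge> 9" using assms(3) by simp
    from I.network[OF N this] show ?thesis using that by blast
  qed
  have "aff_on N X h (\<lambda>x. 2 * Mf * I.FF x - Mf)" by (intro aff_intros h(2))
  from net_output[OF h(1) this] obtain \<psi> where psi: "\<psi> \<in> H N L" "\<forall>x\<in>X. \<psi> x = 2 * Mf * I.FF x - Mf"
    by blast
  have close: "\<bar>\<alpha> j (I.code j x) - g x\<bar> \<le> \<eta>/2" if x: "x \<in> X" and j: "j < m" for j x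
  proof -
    have ex: "\<exists>y\<in>X. codeE j y = codeE j x" using x by blast
    define x' where "x' = (SOME y. y \<in> X \<and> codeE j y = codeE j x)"
    have x': "x' \<in> X" "codeE j x' = codeE j x" unfolding x'_def using someI_ex[of "\<lambda>y. y \<in> X \<and> codeE j y = codeE j x"] ex by blast+
    have al: "\<alpha> j (I.code j x) = g x'" unfolding \<alpha>_def codeI x'_def using ex by simp
    have ci: "\<bar>x'$(cd i) - x$(cd i)\<bar> < (b - a) / real n" if "i < D" for i
      using I.code_close[OF x'(1) x j _ that] x'(2) unfolding codeI by simp
    have "dist x' x = norm (x' - x)" by (simp add: dist_norm)
    also have "\<dots> \<le> (\<Sum>k\<in>UNIV. \<bar>(x' - x)$k\<bar>)" by (rule norm_le_l1_cart)
    also have "\<dots> = (\<Sum>i<D. \<bar>(x' - x)$(cd i)\<bar>)" by (rule sum.reindex_bij_betw[OF cd, symmetric])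
    also have "\<dots> < (\<Sum>i<D. (b - a) / real n)"
    proof (rule sum_strict_mono)
      have "0 \<in> {..<D}" using D1 by simp
      then show "{..<D} \<noteq> {}" by blast
    qed (use ci in auto)
    also have "\<dots> = real D * (b - a) / real n" by simp
    also have "\<dots> < du" by (rule nbig)
    finally have "\<bar>f x' - f x\<bar> < \<epsilon>/2" using du(2) x x' by (auto simp: dist_real_def)
    then have "\<bar>g x' - g x\<bar> < \<eta>/2" unfolding g_def \<eta>_def using Mf(1)
      by (simp add: field_simps abs_divide diff_divide_distrib[symmetric])
    then show ?thesis unfolding al by simp
  qed
  have "\<bar>f x - \<psi> x\<bar> < \<epsilon>" if x: "x \<in> X" for x
  proof -
    have acc: "\<bar>I.FF x - g x\<bar> \<le> \<eta>/4 + \<eta>/2"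
      by (rule I.accuracy[OF x, where \<alpha>=\<alpha>]) (use bt(3) McI close[OF x] in auto)
    have p: "\<psi> x = 2 * Mf * I.FF x - Mf" using psi(2) x by simp
    have gg: "2 * Mf * g x = f x + Mf" unfolding g_def using Mf(1) by simp
    have "f x - \<psi> x = 2 * Mf * g x - 2 * Mf * I.FF x" using p gg by simp
    also have "\<dots> = 2 * Mf * (g x - I.FF x)" by (simp add: right_diff_distrib)
    finally have "f x - \<psi> x = 2 * Mf * (g x - I.FF x)" .
    then have "\<bar>f x - \<psi> x\<bar> = 2 * Mf * \<bar>I.FF x - g x\<bar>" using Mf(1) by (simp add: abs_mult abs_minus_commute)
    also have "\<dots> \<le> 2 * Mf * (\<eta>/4 + \<eta>/2)" using acc Mf(1) by (intro mult_left_mono) auto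
    also have "\<dots> = 3/4 * \<epsilon>" unfolding \<eta>_def using Mf(1) by (simp add: field_simps)
    also have "\<dots> < \<epsilon>" using assms(5) by simp
    finally show ?thesis .
  qed
  then show ?thesis using psi(1) unfolding X_def by blast
qed

end
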